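(* Let $k$ be a field of characteristic $p>0$ and $A=k[x_1,\dots,x_r]/(x_1^p,\dots,x_r^p)$ with the Lie Hopf structure $\Delta_{\mathrm{Lie}}$. Then the homomorphism $\Phi_{\Delta_{\mathrm{Lie}}}\colon\operatorname{Ext}^*_A(k,k)\to\operatorname{Ext}^*_{A^e}(A,A)$ satisfies \[ \Phi_{\Delta_{\mathrm{Lie}}}(\eta_i)=\delta_i\quad\text{and}\quad\Phi_{\Delta_{\mathrm{Lie}}}(\zeta_i)=\chi_i\qquad(i=1,\dots,r). \]
   Context: The Lie Hopf structure (restricted enveloping algebra of the abelian restricted Lie algebra $k^r$ with trivial $p$-power map): $\Delta_{\mathrm{Lie}}(x_i)=x_i\otimes1+1\otimes x_i$, antipode $\sigma_{\mathrm{Lie}}(x_i)=-x_i$. $A^e=A\otimes_kA^{op}$; $\Phi_\Delta\colon\operatorname{Ext}^*_A(k,k)\to\operatorname{Ext}^*_{A^e}(A,A)$ is induced by the functor $X\mapsto X\otimes_kA$ from $A$-modules to $A^e$-modules with action $(\alpha\otimes\beta)(x\otimes a)=\sum_{(\alpha)}\alpha_1x\otimes\alpha_2a\beta$ (exact, preserves projectives, sends $k$ to $A$; $\Phi_\Delta$ applies it to a projective resolution of $k$ and to cocycles). Resolutions and classes: for $A_i=k[x_i]/(x_i^p)$, let $P^{(i)}_*$ be $\cdots\to A_i\xrightarrow{x_i}A_i\xrightarrow{x_i^{p-1}}A_i\xrightarrow{x_i}A_i\to0$ augmented to $k$; $P_*=P^{(1)}_*\otimes_k\cdots\otimes_kP^{(r)}_*$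 resolves $k$ over $A$, with summands $P_{j_1,\dots,j_r}\cong A$. $\hat\eta_i$ (resp. $\hat\zeta_i$) is the cochain $P_*\to k$ equal to the augmentation on $P_{j_1,\dots,j_r}$ with $j_i=1$ (resp. $2$), $j_\ell=0$ for $\ell\ne i$, zero elsewhere; $\eta_i,\zeta_i$ are their classes in $\operatorname{Ext}^*_A(k,k)$. With $A_i^e=k[y_i,z_i]/(y_i^p,z_i^p)$, $y_i=x_i\otimes1$, $z_i=1\otimes x_i$, $Q^{(i)}_*$ is $\cdots\to A_i^e\xrightarrow{y_i-z_i}A_i^e\xrightarrow{(y_i-z_i)^{p-1}}A_i^e\xrightarrow{y_i-z_i}A_i^e\to0$ augmented by multiplication to $A_i$; $Q_*=\bigotimes_i Q^{(i)}_*$ resolves $A$ over $A^e$ with summands $Q_{j_1,\dots,j_r}\cong A^e$. $\hat\delta_i$ (resp. $\hat\chi_i$) is the cochain $Q_*\to A$ equal to multiplication $A^e\to A$ on $Q_{j_1,\dots,j_r}$ with $j_i=1$ (resp. $2$), $j_\ell=0$ for $\ell\ne i$, zero elsewhere; $\delta_i,\chi_i$ are their classes in $\operatorname{Ext}^*_{A^e}(A,A)$. *)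

theory Defs
  imports Main
begin

text \<open>A = k[x_0..x_(r-1)]/(x_i^p), elements are coefficient functions
on exponent vectors (monomials).  A (x) A and A^e = A (x) A^op (= A (x) A, A commutative)
are coefficient functions on pairs of monomials.  Free modules with summands indexed
by multi-indices J (index tuples (j_0,..,j_(r-1))) are functions J -> summand.\<close>

type_synonym mono = "nat \<Rightarrow> nat"
type_synonym 'k alg = "mono \<Rightarrow> 'k"
type_synonym 'k alg2 = "mono \<times> mono \<Rightarrow> 'k"
type_synonym 'k cx = "mono \<Rightarrow> 'k alg2"       \<comment> \<open>element of (P_n (x) A) or of Q_n\<close>
type_synonym 'k pel = "mono \<Rightarrow> 'k alg"       \<comment> \<open>element of P_n\<close>

definition madd :: "mono \<Rightarrow> mono \<Rightarrow> mono" where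
  "madd a b = (\<lambda>i. a i + b i)"

definition zerom :: mono where "zerom = (\<lambda>_. 0)"

definition unitv :: "nat \<Rightarrow> mono" where "unitv i = (\<lambda>j. if j = i then 1 else 0)"

definition tmonos :: "nat \<Rightarrow> nat \<Rightarrow> mono set" where
  "tmonos r p = {e. \<forall>i. (i < r \<longrightarrow> e i < p) \<and> (r \<le> i \<longrightarrow> e i = 0)}"

text \<open>multi-indices J of total degree n (summands P_J of P_n, Q_J of Q_n)\<close>
definition idx :: "nat \<Rightarrow> nat \<Rightarrow> mono set" where
  "idx r n = {J. (\<forall>i. r \<le> i \<longrightarrow> J i = 0) \<and> (\<Sum>i<r. J i) = n}"

definition algA :: "nat \<Rightarrow> nat \<Rightarrow> ('k::zero) alg set" where
  "algA r p = {f. \<forall>e. e \<notin> tmonos r p \<longrightarrow> f e = 0}"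

definition alg2 :: "nat \<Rightarrow> nat \<Rightarrow> ('k::zero) alg2 set" where
  "alg2 r p = {u. \<forall>ab. ab \<notin> tmonos r p \<times> tmonos r p \<longrightarrow> u ab = 0}"

text \<open>carrier of P_n (x) A, and also of Q_n (both are direct sums of copies of A (x) A)\<close>
definition cx :: "nat \<Rightarrow> nat \<Rightarrow> nat \<Rightarrow> ('k::zero) cx set" where
  "cx r p n = {w. (\<forall>J. J \<notin> idx r n \<longrightarrow> w J = (\<lambda>_. 0)) \<and> (\<forall>J. w J \<in> alg2 r p)}"

text \<open>carrier of P_n\<close>
definition pel :: "nat \<Rightarrow> nat \<Rightarrow> nat \<Rightarrow> ('k::zero) pel set" where
  "pel r p n = {x. (\<forall>J. J \<notin> idx r n \<longrightarrow> x J = (\<lambda>_. 0)) \<and> (\<forall>J. x J \<in> algA r p)}"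

definition mon :: "mono \<Rightarrow> ('k::{zero,one}) alg" where
  "mon e = (\<lambda>e'. if e' = e then 1 else 0)"

definition mon2 :: "mono \<times> mono \<Rightarrow> ('k::{zero,one}) alg2" where
  "mon2 ab = (\<lambda>cd. if cd = ab then 1 else 0)"

definition mulA :: "nat \<Rightarrow> nat \<Rightarrow> ('k::comm_ring_1) alg \<Rightarrow> 'k alg \<Rightarrow> 'k alg" where
  "mulA r p f g = (\<lambda>e. if e \<in> tmonos r p then
     (\<Sum>a\<in>tmonos r p. \<Sum>b\<in>tmonos r p. if madd a b = e then f a * g b else 0) else 0)"

text \<open>multiplication in A (x) A (equivalently in A^e = A (x) A^op, as A is commutative)\<close>
definition mul2 :: "nat \<Rightarrow> nat \<Rightarrow> ('k::comm_ring_1) alg2 \<Rightarrow> 'k alg2 \<Rightarrow> 'k alg2" where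
  "mul2 r p u v = (\<lambda>(e1, e2). if e1 \<in> tmonos r p \<and> e2 \<in> tmonos r p then
     (\<Sum>ab\<in>tmonos r p \<times> tmonos r p. \<Sum>cd\<in>tmonos r p \<times> tmonos r p.
        if madd (fst ab) (fst cd) = e1 \<and> madd (snd ab) (snd cd) = e2 then u ab * v cd else 0)
     else 0)"

definition one2 :: "('k::{zero,one}) alg2" where "one2 = mon2 (zerom, zerom)"

definition pow2 :: "nat \<Rightarrow> nat \<Rightarrow> ('k::comm_ring_1) alg2 \<Rightarrow> nat \<Rightarrow> 'k alg2" where
  "pow2 r p u n = (mul2 r p u ^^ n) one2"

text \<open>Lie coproduct: Delta(x_i) = x_i (x) 1 + 1 (x) x_i, hence
  Delta(x^m) = sum_{a+b=m} prod_i binom(m_i,a_i) x^a (x) x^b (zero if m is not a monomial of A)\<close>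
definition DeltaLie :: "nat \<Rightarrow> nat \<Rightarrow> ('k::comm_ring_1) alg \<Rightarrow> 'k alg2" where
  "DeltaLie r p f = (\<lambda>(a, b). if madd a b \<in> tmonos r p
     then of_nat (\<Prod>i<r. (a i + b i) choose a i) * f (madd a b) else 0)"

text \<open>the algebra map A^e -> A (x) A,  alpha (x) beta |-> Delta(alpha) (1 (x) beta);
  the A^e-action on X (x) A is (alpha (x) beta)(x (x) a) = sum alpha_1 x (x) alpha_2 a beta,
  i.e. multiplication by the image of alpha (x) beta under this map\<close>
definition twist :: "nat \<Rightarrow> nat \<Rightarrow> ('k::comm_ring_1) alg2 \<Rightarrow> 'k alg2" where
  "twist r p \<alpha> = (\<lambda>ab. \<Sum>cd\<in>tmonos r p \<times> tmonos r p.
      \<alpha> cd * mul2 r p (DeltaLie r p (mon (fst cd))) (mon2 (zerom, snd cd)) ab)"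

definition actC :: "nat \<Rightarrow> nat \<Rightarrow> ('k::comm_ring_1) alg2 \<Rightarrow> 'k cx \<Rightarrow> 'k cx" where
  "actC r p \<alpha> w = (\<lambda>J. mul2 r p (twist r p \<alpha>) (w J))"

definition actQ :: "nat \<Rightarrow> nat \<Rightarrow> ('k::comm_ring_1) alg2 \<Rightarrow> 'k cx \<Rightarrow> 'k cx" where
  "actQ r p \<alpha> w = (\<lambda>J. mul2 r p \<alpha> (w J))"

definition actA :: "nat \<Rightarrow> nat \<Rightarrow> ('k::comm_ring_1) alg2 \<Rightarrow> 'k alg \<Rightarrow> 'k alg" where
  "actA r p \<alpha> a = (\<lambda>e. \<Sum>cd\<in>tmonos r p \<times> tmonos r p.
      \<alpha> cd * mulA r p (mon (fst cd)) (mulA r p a (mon (snd cd))) e)"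

definition addC :: "('k::plus) cx \<Rightarrow> 'k cx \<Rightarrow> 'k cx" where
  "addC w v = (\<lambda>J ab. w J ab + v J ab)"

text \<open>Koszul sign of the tensor product of complexes\<close>
definition ksign :: "mono \<Rightarrow> nat \<Rightarrow> 'k::comm_ring_1" where
  "ksign J i = (-1) ^ (\<Sum>j<i. J j)"

text \<open>differential of P_* (x) A, i.e. d_P (x) id_A: the factor P^(i) maps degree j+1 to
  degree j by x_i if j+1 is odd and by x_i^(p-1) if j+1 is even\<close>
definition coefP :: "nat \<Rightarrow> nat \<Rightarrow> nat \<Rightarrow> nat \<Rightarrow> ('k::comm_ring_1) alg2" where
  "coefP r p i j = (if even j then mon2 (unitv i, zerom)
                    else pow2 r p (mon2 (unitv i, zerom)) (p - 1))"

definition dP :: "nat \<Rightarrow> nat \<Rightarrow> ('k::comm_ring_1) cx \<Rightarrow> 'k cx" where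
  "dP r p w = (\<lambda>J ab. \<Sum>i<r. ksign J i * mul2 r p (coefP r p i (J i)) (w (madd J (unitv i))) ab)"

text \<open>differential of Q_*: by y_i - z_i, resp. (y_i - z_i)^(p-1)\<close>
definition yz :: "nat \<Rightarrow> ('k::comm_ring_1) alg2" where
  "yz i = (\<lambda>ab. mon2 (unitv i, zerom) ab - mon2 (zerom, unitv i) ab)"

definition coefQ :: "nat \<Rightarrow> nat \<Rightarrow> nat \<Rightarrow> nat \<Rightarrow> ('k::comm_ring_1) alg2" where
  "coefQ r p i j = (if even j then yz i else pow2 r p (yz i) (p - 1))"

definition dQ :: "nat \<Rightarrow> nat \<Rightarrow> ('k::comm_ring_1) cx \<Rightarrow> 'k cx" where
  "dQ r p w = (\<lambda>J ab. \<Sum>i<r. ksign J i * mul2 r p (coefQ r p i (J i)) (w (madd J (unitv i))) ab)"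

text \<open>augmentation of P_*(x)A: P_0 (x) A -> k (x) A = A, epsilon (x) id\<close>
definition epsP :: "('k::zero) cx \<Rightarrow> 'k alg" where
  "epsP w = (\<lambda>b. w zerom (zerom, b))"

definition mu :: "nat \<Rightarrow> nat \<Rightarrow> ('k::comm_ring_1) alg2 \<Rightarrow> 'k alg" where
  "mu r p u = (\<lambda>e. \<Sum>ab\<in>tmonos r p \<times> tmonos r p. u ab * mulA r p (mon (fst ab)) (mon (snd ab)) e)"

definition muQ :: "nat \<Rightarrow> nat \<Rightarrow> ('k::comm_ring_1) cx \<Rightarrow> 'k alg" where
  "muQ r p w = mu r p (w zerom)"

text \<open>A comparison map of A^e-resolutions Q_* -> P_* (x) A lifting id_A\<close>
definition comparison :: "nat \<Rightarrow> nat \<Rightarrow> (nat \<Rightarrow> ('k::comm_ring_1) cx \<Rightarrow> 'k cx) \<Rightarrow> bool" where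
  "comparison r p \<Psi> \<longleftrightarrow>
     (\<forall>n. \<forall>w\<in>cx r p n. \<Psi> n w \<in> cx r p n) \<and>
     (\<forall>n. \<forall>w\<in>cx r p n. \<forall>v\<in>cx r p n. \<Psi> n (addC w v) = addC (\<Psi> n w) (\<Psi> n v)) \<and>
     (\<forall>n. \<forall>\<alpha>\<in>alg2 r p. \<forall>w\<in>cx r p n. \<Psi> n (actQ r p \<alpha> w) = actC r p \<alpha> (\<Psi> n w)) \<and>
     (\<forall>n. \<forall>w\<in>cx r p (Suc n). dP r p (\<Psi> (Suc n) w) = \<Psi> n (dQ r p w)) \<and>
     (\<forall>w\<in>cx r p 0. epsP (\<Psi> 0 w) = muQ r p w)"

text \<open>The functor X |-> X (x) A on cochains: f : P_n -> k (A-linear) gives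
  f (x) id : P_n (x) A -> k (x) A = A\<close>
definition single :: "mono \<Rightarrow> ('k::zero) alg \<Rightarrow> 'k pel" where
  "single J x = (\<lambda>J'. if J' = J then x else (\<lambda>_. 0))"

definition tensorA :: "nat \<Rightarrow> nat \<Rightarrow> nat \<Rightarrow> (('k::comm_ring_1) pel \<Rightarrow> 'k) \<Rightarrow> 'k cx \<Rightarrow> 'k alg" where
  "tensorA r p n f w = (\<lambda>b. \<Sum>J\<in>idx r n. \<Sum>a\<in>tmonos r p. f (single J (mon a)) * w J (a, b))"

text \<open>the cochains eta^_i, zeta^_i : P_* -> k (augmentation on the summand P_{e_i}, resp. P_{2e_i})\<close>
definition eta_hat :: "nat \<Rightarrow> ('k::zero) pel \<Rightarrow> 'k" where
  "eta_hat i x = x (unitv i) zerom"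

definition zeta_hat :: "nat \<Rightarrow> ('k::zero) pel \<Rightarrow> 'k" where
  "zeta_hat i x = x (\<lambda>j. 2 * unitv i j) zerom"

text \<open>the cochains delta^_i, chi^_i : Q_* -> A (multiplication on Q_{e_i}, resp. Q_{2e_i})\<close>
definition delta_hat :: "nat \<Rightarrow> nat \<Rightarrow> nat \<Rightarrow> ('k::comm_ring_1) cx \<Rightarrow> 'k alg" where
  "delta_hat r p i w = mu r p (w (unitv i))"

definition chi_hat :: "nat \<Rightarrow> nat \<Rightarrow> nat \<Rightarrow> ('k::comm_ring_1) cx \<Rightarrow> 'k alg" where
  "chi_hat r p i w = mu r p (w (\<lambda>j. 2 * unitv i j))"

definition homQ :: "nat \<Rightarrow> nat \<Rightarrow> nat \<Rightarrow> (('k::comm_ring_1) cx \<Rightarrow> 'k alg) \<Rightarrow> bool" where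
  "homQ r p m h \<longleftrightarrow>
     (\<forall>w\<in>cx r p m. h w \<in> algA r p) \<and>
     (\<forall>w\<in>cx r p m. \<forall>v\<in>cx r p m. h (addC w v) = (\<lambda>e. h w e + h v e)) \<and>
     (\<forall>\<alpha>\<in>alg2 r p. \<forall>w\<in>cx r p m. h (actQ r p \<alpha> w) = actA r p \<alpha> (h w))"

text \<open>two n-cochains Q_n -> A define the same class in Ext^n_{A^e}(A,A) (n >= 1):
  they differ by a coboundary h o d\<close>
definition cohomologous :: "nat \<Rightarrow> nat \<Rightarrow> nat \<Rightarrow> (('k::comm_ring_1) cx \<Rightarrow> 'k alg) \<Rightarrow> ('k cx \<Rightarrow> 'k alg) \<Rightarrow> bool" where
  "cohomologous r p n f g \<longleftrightarrow>
     (\<exists>h. homQ r p (n - 1) h \<and> (\<forall>w\<in>cx r p n. f w = (\<lambda>e. g w e + h (dQ r p w) e)))"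

end

theory Submission
  imports Defs "HOL-Computational_Algebra.Primes"
begin


definition padd :: "mono \<times> mono \<Rightarrow> mono \<times> mono \<Rightarrow> mono \<times> mono" where
  "padd x y = (madd (fst x) (fst y), madd (snd x) (snd y))"

definition tm2 :: "nat \<Rightarrow> nat \<Rightarrow> mono \<times> mono \<Rightarrow> ('k::{zero,one}) alg2" where
  "tm2 r p z = (\<lambda>e. if e = z \<and> z \<in> tmonos r p \<times> tmonos r p then 1 else 0)"

definition Bn :: "nat \<Rightarrow> mono \<Rightarrow> mono \<Rightarrow> nat" where
  "Bn r u v = (\<Prod>j<r. (u j + v j) choose u j)"

lemma Bn_split: "i < r \<Longrightarrow> Bn r u v = ((u i + v i) choose u i) * (\<Prod>j\<in>{..<r}-{i}. (u j + v j) choose u j)"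
  unfolding Bn_def by (subst prod.remove[of _ i]) auto

lemma aux_if_sum: "(A \<Longrightarrow> x1 = c1 * R) \<Longrightarrow> (B \<Longrightarrow> x2 = c2 * R) \<Longrightarrow> (if A then c1 else 0) + (if B then c2 else 0) = (c::nat)
   \<Longrightarrow> y = c * R \<Longrightarrow> (if A then x1 else 0) + (if B then x2 else 0) = y"
  by (cases A; cases B) (simp_all add: add_mult_distrib[symmetric])

lemma pascal_i:
  assumes "i < r" "1 \<le> u i + v i"
  shows "(if 1 \<le> u i then Bn r (u - unitv i) v else 0) + (if 1 \<le> v i then Bn r u (v - unitv i) else 0) = Bn r u v"
proof -
  let ?R = "\<Prod>j\<in>{..<r}-{i}. (u j + v j) choose u j"
  have R1: "(\<Prod>j\<in>{..<r}-{i}. ((u - unitv i) j + v j) choose (u - unitv i) j) = ?R"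
    by (rule prod.cong) (auto simp: unitv_def)
  have R2: "(\<Prod>j\<in>{..<r}-{i}. (u j + (v - unitv i) j) choose u j) = ?R"
    by (rule prod.cong) (auto simp: unitv_def)
  have b1: "Bn r (u - unitv i) v = ((u i - 1 + v i) choose (u i - 1)) * ?R"
    using Bn_split[OF assms(1), of "u - unitv i" v] R1 by (simp add: unitv_def)
  have b2: "1 \<le> v i \<Longrightarrow> Bn r u (v - unitv i) = ((u i + v i - 1) choose u i) * ?R"
    using Bn_split[OF assms(1), of u "v - unitv i"] R2 by (simp add: unitv_def)
  have pas: "(if 1 \<le> u i then (u i - 1 + v i) choose (u i - 1) else 0) + (if 1 \<le> v i then (u i + v i - 1) choose u i else 0)
        = (u i + v i) choose u i"
  proof (cases "u i")
    case 0
    then show ?thesis using assms by simp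
  next
    case (Suc k)
    show ?thesis
    proof (cases "v i")
      case 0
      then show ?thesis using Suc by simp
    next
      case (Suc l)
      have "(u i + v i) choose u i = Suc (k + l + 1) choose Suc k" using Suc \<open>u i = Suc k\<close> by simp
      also have "\<dots> = ((k + l + 1) choose k) + ((k + l + 1) choose Suc k)" by simp
      finally show ?thesis using Suc \<open>u i = Suc k\<close> by simp
    qed
  qed
  show ?thesis by (rule aux_if_sum[OF b1 b2 pas Bn_split[OF assms(1)]])
qed



lemma finite_tmonos[simp]: "finite (tmonos r p)"
proof -
  have "tmonos r p = {f. \<forall>x. (x \<in> {..<r} \<longrightarrow> f x \<in> {..<p}) \<and> (x \<notin> {..<r} \<longrightarrow> f x = 0)}"
    by (auto simp: tmonos_def)
  then show ?thesis using finite_set_of_finite_funs[of "{..<r}" "{..<p}" 0] by simp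
qed

lemma finite_idx[simp]: "finite (idx r n)"
proof -
  have "idx r n \<subseteq> {f. \<forall>x. (x \<in> {..<r} \<longrightarrow> f x \<in> {..n}) \<and> (x \<notin> {..<r} \<longrightarrow> f x = 0)}"
  proof
    fix J assume J: "J \<in> idx r n"
    have "J x \<le> n" if "x < r" for x
    proof -
      have "J x \<le> (\<Sum>i<r. J i)" using that by (intro member_le_sum) auto
      then show ?thesis using J by (simp add: idx_def)
    qed
    then show "J \<in> {f. \<forall>x. (x \<in> {..<r} \<longrightarrow> f x \<in> {..n}) \<and> (x \<notin> {..<r} \<longrightarrow> f x = 0)}"
      using J by (auto simp: idx_def)
  qed
  then show ?thesis using finite_subset finite_set_of_finite_funs[of "{..<r}" "{..n}" 0] by blast
qed

lemma madd_comm: "madd a b = madd b a" by (auto simp: madd_def)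
lemma madd_assoc: "madd (madd a b) c = madd a (madd b c)" by (auto simp: madd_def)
lemma madd_zero[simp]: "madd a zerom = a" "madd zerom a = a" by (auto simp: madd_def zerom_def)
lemma padd_comm: "padd a b = padd b a" by (auto simp: padd_def madd_comm)
lemma padd_assoc: "padd (padd a b) c = padd a (padd b c)" by (auto simp: padd_def madd_assoc)

lemma madd_T1: "madd a b \<in> tmonos r p \<Longrightarrow> a \<in> tmonos r p"
  by (auto simp: tmonos_def madd_def)
lemma madd_T2: "madd a b \<in> tmonos r p \<Longrightarrow> b \<in> tmonos r p"
  using madd_T1 madd_comm by metis
lemma padd_T1: "padd a b \<in> tmonos r p \<times> tmonos r p \<Longrightarrow> a \<in> tmonos r p \<times> tmonos r p"
  by (cases a; cases b) (auto simp: padd_def dest: madd_T1)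
lemma padd_T2: "padd a b \<in> tmonos r p \<times> tmonos r p \<Longrightarrow> b \<in> tmonos r p \<times> tmonos r p"
  using padd_T1 padd_comm by metis

lemma zerom_T[simp]: "0 < p \<Longrightarrow> zerom \<in> tmonos r p" by (auto simp: tmonos_def zerom_def)
lemma unitv_T[simp]: "i < r \<Longrightarrow> 1 < p \<Longrightarrow> unitv i \<in> tmonos r p" by (auto simp: tmonos_def unitv_def)

lemma mul2_expand:
  "mul2 r p u v e = (\<Sum>x\<in>tmonos r p \<times> tmonos r p. \<Sum>y\<in>tmonos r p \<times> tmonos r p. u x * v y * tm2 r p (padd x y) e)"
proof (cases e)
  case (Pair e1 e2)
  show ?thesis
  proof (cases "e \<in> tmonos r p \<times> tmonos r p")
    case True
    then show ?thesis using Pair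
      by (auto simp: mul2_def tm2_def padd_def intro!: sum.cong)
  next
    case False
    then show ?thesis using Pair
      by (auto simp: mul2_def tm2_def padd_def intro!: sum.neutral)
  qed
qed

lemma sum_tm2: "(\<Sum>z\<in>tmonos r p \<times> tmonos r p. tm2 r p a z * F z) = (if a \<in> tmonos r p \<times> tmonos r p then F a else (0::'k::comm_ring_1))"
proof -
  have eq: "(\<lambda>z. tm2 r p a z * F z) = (\<lambda>z. if z = a then (if a \<in> tmonos r p \<times> tmonos r p then F a else 0) else 0)"
    by (auto simp: tm2_def fun_eq_iff)
  show ?thesis unfolding eq by (simp add: sum.delta')
qed

lemma tm2_padd_out: "a \<notin> tmonos r p \<times> tmonos r p \<Longrightarrow> tm2 r p (padd a b) e = 0"
  unfolding tm2_def using padd_T1[of a b r p] by auto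

lemma sum_tm2': "(\<Sum>z\<in>tmonos r p \<times> tmonos r p. tm2 r p a z * (tm2 r p (padd z b) e::'k::comm_ring_1)) = tm2 r p (padd a b) e"
  by (simp add: sum_tm2 tm2_padd_out)

lemma sum_tm2'': "(\<Sum>z\<in>tmonos r p \<times> tmonos r p. tm2 r p a z * (tm2 r p (padd b z) e::'k::comm_ring_1)) = tm2 r p (padd b a) e"
  using sum_tm2'[of r p a b e] by (simp add: padd_comm)

lemma mul2_comm: "mul2 r p u v = mul2 r p v u"
  apply (rule ext)
  apply (simp add: mul2_expand)
  apply (subst sum.swap)
  apply (simp add: padd_comm mult.commute mult.left_commute)
  done

lemma mul2_assoc: "mul2 r p (mul2 r p u v) w = (mul2 r p u (mul2 r p v w) :: 'k::comm_ring_1 alg2)"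
proof (rule ext)
  fix e
  let ?T = "tmonos r p \<times> tmonos r p"
  let ?t = "tm2 r p :: _ \<Rightarrow> 'k alg2"
  have "mul2 r p (mul2 r p u v) w e =
     (\<Sum>z\<in>?T. \<Sum>y\<in>?T. (\<Sum>x\<in>?T. \<Sum>x'\<in>?T. u x * v x' * ?t (padd x x') z) * w y * ?t (padd z y) e)"
    by (simp add: mul2_expand)
  also have "\<dots> = (\<Sum>z\<in>?T. \<Sum>y\<in>?T. \<Sum>x\<in>?T. \<Sum>x'\<in>?T. u x * v x' * w y * (?t (padd x x') z * ?t (padd z y) e))"
    by (simp only: sum_distrib_right) (simp add: ac_simps)
  also have "\<dots> = (\<Sum>z\<in>?T. \<Sum>x\<in>?T. \<Sum>x'\<in>?T. \<Sum>y\<in>?T. u x * v x' * w y * (?t (padd x x') z * ?t (padd z y) e))"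
  proof (rule sum.cong[OF refl])
    fix z
    have "(\<Sum>y\<in>?T. \<Sum>x\<in>?T. \<Sum>x'\<in>?T. u x * v x' * w y * (?t (padd x x') z * ?t (padd z y) e))
      = (\<Sum>x\<in>?T. \<Sum>y\<in>?T. \<Sum>x'\<in>?T. u x * v x' * w y * (?t (padd x x') z * ?t (padd z y) e))"
      by (rule sum.swap)
    also have "\<dots> = (\<Sum>x\<in>?T. \<Sum>x'\<in>?T. \<Sum>y\<in>?T. u x * v x' * w y * (?t (padd x x') z * ?t (padd z y) e))"
      by (rule sum.cong[OF refl], rule sum.swap)
    finally show "(\<Sum>y\<in>?T. \<Sum>x\<in>?T. \<Sum>x'\<in>?T. u x * v x' * w y * (?t (padd x x') z * ?t (padd z y) e))
      = (\<Sum>x\<in>?T. \<Sum>x'\<in>?T. \<Sum>y\<in>?T. u x * v x' * w y * (?t (padd x x') z * ?t (padd z y) e))" .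
  qed
  also have "\<dots> = (\<Sum>x\<in>?T. \<Sum>x'\<in>?T. \<Sum>y\<in>?T. \<Sum>z\<in>?T. u x * v x' * w y * (?t (padd x x') z * ?t (padd z y) e))"
  proof -
    have "(\<Sum>z\<in>?T. \<Sum>x\<in>?T. \<Sum>x'\<in>?T. \<Sum>y\<in>?T. u x * v x' * w y * (?t (padd x x') z * ?t (padd z y) e))
      = (\<Sum>x\<in>?T. \<Sum>z\<in>?T. \<Sum>x'\<in>?T. \<Sum>y\<in>?T. u x * v x' * w y * (?t (padd x x') z * ?t (padd z y) e))"
      by (rule sum.swap)
    also have "\<dots> = (\<Sum>x\<in>?T. \<Sum>x'\<in>?T. \<Sum>z\<in>?T. \<Sum>y\<in>?T. u x * v x' * w y * (?t (padd x x') z * ?t (padd z y) e))"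
      by (rule sum.cong[OF refl], rule sum.swap)
    also have "\<dots> = (\<Sum>x\<in>?T. \<Sum>x'\<in>?T. \<Sum>y\<in>?T. \<Sum>z\<in>?T. u x * v x' * w y * (?t (padd x x') z * ?t (padd z y) e))"
      by (rule sum.cong[OF refl], rule sum.cong[OF refl], rule sum.swap)
    finally show ?thesis .
  qed
  also have "\<dots> = (\<Sum>x\<in>?T. \<Sum>x'\<in>?T. \<Sum>y\<in>?T. u x * v x' * w y * ?t (padd x (padd x' y)) e)"
    by (simp add: sum_tm2' padd_assoc flip: sum_distrib_left)
  also have "\<dots> = (\<Sum>x\<in>?T. \<Sum>x'\<in>?T. \<Sum>y\<in>?T. \<Sum>z\<in>?T. u x * v x' * w y * (?t (padd x' y) z * ?t (padd x z) e))"
    by (simp add: sum_tm2'' flip: sum_distrib_left)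
  also have "\<dots> = (\<Sum>x\<in>?T. \<Sum>z\<in>?T. \<Sum>x'\<in>?T. \<Sum>y\<in>?T. u x * v x' * w y * (?t (padd x' y) z * ?t (padd x z) e))"
  proof (rule sum.cong[OF refl])
    fix x
    have "(\<Sum>x'\<in>?T. \<Sum>y\<in>?T. \<Sum>z\<in>?T. u x * v x' * w y * (?t (padd x' y) z * ?t (padd x z) e))
       = (\<Sum>x'\<in>?T. \<Sum>z\<in>?T. \<Sum>y\<in>?T. u x * v x' * w y * (?t (padd x' y) z * ?t (padd x z) e))"
      by (rule sum.cong[OF refl], rule sum.swap)
    also have "\<dots> = (\<Sum>z\<in>?T. \<Sum>x'\<in>?T. \<Sum>y\<in>?T. u x * v x' * w y * (?t (padd x' y) z * ?t (padd x z) e))"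
      by (rule sum.swap)
    finally show "(\<Sum>x'\<in>?T. \<Sum>y\<in>?T. \<Sum>z\<in>?T. u x * v x' * w y * (?t (padd x' y) z * ?t (padd x z) e))
       = (\<Sum>z\<in>?T. \<Sum>x'\<in>?T. \<Sum>y\<in>?T. u x * v x' * w y * (?t (padd x' y) z * ?t (padd x z) e))" .
  qed
  also have "\<dots> = mul2 r p u (mul2 r p v w) e"
    by (simp add: mul2_expand sum_distrib_left sum_distrib_right ac_simps)
  finally show "mul2 r p (mul2 r p u v) w e = mul2 r p u (mul2 r p v w) e" .
qed


abbreviation T2 :: "nat \<Rightarrow> nat \<Rightarrow> (mono \<times> mono) set" where "T2 r p \<equiv> tmonos r p \<times> tmonos r p"

lemma mul2_alg2[simp]: "mul2 r p u v \<in> alg2 r p"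
  by (auto simp: alg2_def mul2_def)

lemma tm2_alg2[simp]: "tm2 r p z \<in> alg2 r p"
  by (auto simp: alg2_def tm2_def)

lemma alg2_out: "u \<in> alg2 r p \<Longrightarrow> e \<notin> T2 r p \<Longrightarrow> u e = 0"
  by (cases e) (auto simp: alg2_def)

lemma mul2_tm2_left: "mul2 r p (tm2 r p a) u e = (\<Sum>y\<in>T2 r p. u y * (tm2 r p (padd a y) e :: 'k::comm_ring_1))"
  by (simp add: mul2_expand mult.assoc sum_tm2 tm2_padd_out flip: sum_distrib_left)

lemma mul2_tm2_tm2: "mul2 r p (tm2 r p a) (tm2 r p b) = (tm2 r p (padd a b) :: 'k::comm_ring_1 alg2)"
  by (rule ext) (simp add: mul2_tm2_left mult.commute[of "tm2 r p (padd a _) _"] sum_tm2'')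

lemma alg2_expand: "u \<in> alg2 r p \<Longrightarrow> u e = (\<Sum>z\<in>T2 r p. u z * (tm2 r p z e :: 'k::comm_ring_1))"
proof -
  assume u: "u \<in> alg2 r p"
  have eq: "(\<lambda>z. u z * tm2 r p z e) = (\<lambda>z. if z = e then (if e \<in> T2 r p then u e else 0) else 0)"
    by (auto simp: tm2_def fun_eq_iff)
  show ?thesis unfolding eq using u by (cases e) (auto simp: sum.delta' alg2_def)
qed

lemma mul2_tm2_zero: "0 < p \<Longrightarrow> u \<in> alg2 r p \<Longrightarrow> mul2 r p (tm2 r p (zerom, zerom)) u = (u :: 'k::comm_ring_1 alg2)"
  apply (rule ext)
  apply (simp add: mul2_tm2_left)
  apply (subst (2) alg2_expand[of u], assumption)
  apply (simp add: padd_def)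
  done

lemma one2_eq: "0 < p \<Longrightarrow> one2 = tm2 r p (zerom, zerom)"
  by (auto simp: one2_def mon2_def tm2_def fun_eq_iff)

lemma mon2_eq: "z \<in> T2 r p \<Longrightarrow> mon2 z = tm2 r p z"
  by (auto simp: mon2_def tm2_def fun_eq_iff)

lemma sum_swap3: "(\<Sum>x\<in>A. \<Sum>y\<in>B. \<Sum>s\<in>C. h x y s) = (\<Sum>s\<in>C. \<Sum>x\<in>A. \<Sum>y\<in>B. h x y s)"
proof -
  have "(\<Sum>x\<in>A. \<Sum>y\<in>B. \<Sum>s\<in>C. h x y s) = (\<Sum>x\<in>A. \<Sum>s\<in>C. \<Sum>y\<in>B. h x y s)"
    by (rule sum.cong[OF refl], rule sum.swap)
  also have "\<dots> = (\<Sum>s\<in>C. \<Sum>x\<in>A. \<Sum>y\<in>B. h x y s)" by (rule sum.swap)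
  finally show ?thesis .
qed

lemma mul2_sum_left: "mul2 r p (\<lambda>e. \<Sum>s\<in>S. c s * f s e) g e0 = (\<Sum>s\<in>S. (c s :: 'k::comm_ring_1) * mul2 r p (f s) g e0)"
proof -
  have "mul2 r p (\<lambda>e. \<Sum>s\<in>S. c s * f s e) g e0 = (\<Sum>x\<in>T2 r p. \<Sum>y\<in>T2 r p. \<Sum>s\<in>S. c s * (f s x * g y * tm2 r p (padd x y) e0))"
    by (simp add: mul2_expand sum_distrib_left sum_distrib_right ac_simps)
  also have "\<dots> = (\<Sum>s\<in>S. \<Sum>x\<in>T2 r p. \<Sum>y\<in>T2 r p. c s * (f s x * g y * tm2 r p (padd x y) e0))"
    by (rule sum_swap3)
  also have "\<dots> = (\<Sum>s\<in>S. (c s :: 'k::comm_ring_1) * mul2 r p (f s) g e0)"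
    by (simp add: mul2_expand sum_distrib_left)
  finally show ?thesis .
qed

lemma mul2_sum_right: "mul2 r p g (\<lambda>e. \<Sum>s\<in>S. c s * f s e) e0 = (\<Sum>s\<in>S. (c s :: 'k::comm_ring_1) * mul2 r p g (f s) e0)"
  by (simp add: mul2_comm[of r p g] mul2_sum_left)

lemma mul2_add_left: "mul2 r p (\<lambda>e. f e + g e) h = (\<lambda>e. mul2 r p f h e + (mul2 r p g h e :: 'k::comm_ring_1))"
  by (rule ext) (simp add: mul2_expand sum.distrib distrib_right)

lemma mul2_add_right: "mul2 r p h (\<lambda>e. f e + g e) = (\<lambda>e. mul2 r p h f e + (mul2 r p h g e :: 'k::comm_ring_1))"
  by (simp add: mul2_comm[of r p h] mul2_add_left)

lemma mul2_scal_left: "mul2 r p (\<lambda>e. c * f e) h = (\<lambda>e. c * (mul2 r p f h e :: 'k::comm_ring_1))"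
  by (rule ext) (simp add: mul2_expand sum_distrib_left ac_simps)

lemma mul2_scal_right: "mul2 r p h (\<lambda>e. c * f e) = (\<lambda>e. c * (mul2 r p h f e :: 'k::comm_ring_1))"
  by (simp add: mul2_comm[of r p h] mul2_scal_left)

lemma mul2_zero_left[simp]: "mul2 r p (\<lambda>_. 0) h = (\<lambda>_. 0 :: 'k::comm_ring_1)"
  by (rule ext) (simp add: mul2_expand)
lemma mul2_zero_right[simp]: "mul2 r p h (\<lambda>_. 0) = (\<lambda>_. 0 :: 'k::comm_ring_1)"
  by (rule ext) (simp add: mul2_expand)


abbreviation D :: "nat \<Rightarrow> nat \<Rightarrow> mono \<Rightarrow> ('k::comm_ring_1) alg2" where
  "D r p a \<equiv> DeltaLie r p (mon a)"


lemma D_eval: "D r p a (x, y) = (if madd x y = a \<and> a \<in> tmonos r p then of_nat (Bn r x y) else 0)"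
  by (auto simp: DeltaLie_def mon_def Bn_def madd_def)

lemma D_alg2[simp]: "D r p a \<in> alg2 r p"
  unfolding alg2_def by (auto simp: D_eval dest: madd_T1 madd_T2)

lemma D_out: "a \<notin> tmonos r p \<Longrightarrow> D r p a = (\<lambda>_. 0)"
  by (rule ext, rename_tac z, case_tac z) (auto simp: D_eval)

lemma zerom_ne_unitv[simp]: "zerom \<noteq> unitv i" "unitv i \<noteq> zerom"
  by (auto simp: zerom_def unitv_def fun_eq_iff)

lemma madd_eq_zero: "madd x y = zerom \<longleftrightarrow> x = zerom \<and> y = zerom"
  by (auto simp: madd_def zerom_def fun_eq_iff)

lemma Bn_simps[simp]: "Bn r zerom zerom = 1" "Bn r (unitv i) zerom = 1" "Bn r zerom (unitv i) = 1"
  by (auto simp: Bn_def zerom_def unitv_def)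

lemma D_zero: "0 < p \<Longrightarrow> D r p zerom = tm2 r p (zerom, zerom)"
  by (rule ext, rename_tac z, case_tac z) (auto simp: D_eval madd_eq_zero tm2_def)

lemma madd_eq_unitv: "madd x y = unitv i \<longleftrightarrow> (x = unitv i \<and> y = zerom) \<or> (x = zerom \<and> y = unitv i)"
proof
  assume h: "madd x y = unitv i"
  then have h': "\<And>j. x j + y j = (if j = i then 1 else 0)" by (auto simp: madd_def unitv_def fun_eq_iff)
  show "(x = unitv i \<and> y = zerom) \<or> (x = zerom \<and> y = unitv i)"
  proof (cases "x i = 1")
    case True
    have "\<forall>j. x j = (if j = i then 1 else 0) \<and> y j = 0"
    proof
      fix j show "x j = (if j = i then 1 else 0) \<and> y j = 0" using h'[of j] True by (cases "j = i") auto
    qed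
    then have "x = unitv i \<and> y = zerom" by (auto simp: unitv_def zerom_def fun_eq_iff)
    then show ?thesis by simp
  next
    case False
    have "\<forall>j. y j = (if j = i then 1 else 0) \<and> x j = 0"
    proof
      fix j show "y j = (if j = i then 1 else 0) \<and> x j = 0" using h'[of j] False by (cases "j = i") auto
    qed
    then have "x = zerom \<and> y = unitv i" by (auto simp: unitv_def zerom_def fun_eq_iff)
    then show ?thesis by simp
  qed
qed (auto simp: madd_def unitv_def zerom_def)

lemma D_unit: "i < r \<Longrightarrow> 1 < p \<Longrightarrow> D r p (unitv i) = (\<lambda>e. tm2 r p (unitv i, zerom) e + tm2 r p (zerom, unitv i) e :: 'k::comm_ring_1)"
  apply (rule ext, rename_tac z, case_tac z)
  apply (auto simp: D_eval madd_eq_unitv tm2_def)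
  done

lemma madd_eq_iff: "madd a y = c \<longleftrightarrow> a \<le> c \<and> y = c - a"
proof
  assume "madd a y = c"
  then have h: "\<And>x. a x + y x = c x" by (auto simp: madd_def fun_eq_iff)
  have "a x \<le> c x" for x using h[of x] by linarith
  moreover have "y x = c x - a x" for x using h[of x] by linarith
  ultimately show "a \<le> c \<and> y = c - a" by (auto simp: le_fun_def fun_eq_iff)
next
  assume "a \<le> c \<and> y = c - a"
  then show "madd a y = c" by (auto simp: madd_def le_fun_def fun_eq_iff)
qed

lemma padd_eq_iff: "e = padd b y \<longleftrightarrow> fst b \<le> fst e \<and> snd b \<le> snd e \<and> y = (fst e - fst b, snd e - snd b)"
proof -
  have "e = padd b y \<longleftrightarrow> madd (fst b) (fst y) = fst e \<and> madd (snd b) (snd y) = snd e"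
    by (cases e) (auto simp: padd_def)
  then show ?thesis by (cases y) (auto simp: madd_eq_iff)
qed

lemma sum_tm2_shift: "(\<Sum>y\<in>T2 r p. F y * (tm2 r p (padd b y) e :: 'k::comm_ring_1)) =
   (if e \<in> T2 r p \<and> fst b \<le> fst e \<and> snd b \<le> snd e then F (fst e - fst b, snd e - snd b) else 0)"
proof -
  let ?y0 = "(fst e - fst b, snd e - snd b)"
  have eq: "(\<lambda>y. F y * (tm2 r p (padd b y) e :: 'k)) = (\<lambda>y. if y = ?y0 then
     (if e \<in> T2 r p \<and> fst b \<le> fst e \<and> snd b \<le> snd e then F ?y0 else 0) else 0)"
  proof (rule ext)
    fix y
    show "F y * (tm2 r p (padd b y) e :: 'k) = (if y = ?y0 then
     (if e \<in> T2 r p \<and> fst b \<le> fst e \<and> snd b \<le> snd e then F ?y0 else 0) else 0)"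
    proof (cases "e = padd b y")
      case True
      note h0 = padd_eq_iff[of e b y, THEN iffD1, OF True]
      have h: "fst b \<le> fst e" "snd b \<le> snd e" "y = ?y0" using h0 by simp_all
      have "tm2 r p (padd b y) e = (if e \<in> T2 r p then 1 else (0::'k))" using True by (simp add: tm2_def)
      then have "F y * (tm2 r p (padd b y) e :: 'k) = (if e \<in> T2 r p then F y else 0)"
        by (cases "e \<in> T2 r p") auto
      then show ?thesis using h by simp
    next
      case False
      then have "tm2 r p (padd b y) e = (0::'k)" by (simp add: tm2_def)
      moreover have "\<not> (y = ?y0 \<and> fst b \<le> fst e \<and> snd b \<le> snd e)" using False padd_eq_iff[of e b y] by blast
      ultimately show ?thesis by auto
    qed
  qed
  have mem: "(fst e - fst b, snd e - snd b) \<in> T2 r p" if "e \<in> T2 r p" "fst b \<le> fst e" "snd b \<le> snd e"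
  proof -
    have "madd (fst b) (fst e - fst b) = fst e" "madd (snd b) (snd e - snd b) = snd e"
      using that by (auto simp: madd_eq_iff)
    then have "fst e - fst b \<in> tmonos r p" "snd e - snd b \<in> tmonos r p"
      using that madd_T2[of "fst b" "fst e - fst b" r p] madd_T2[of "snd b" "snd e - snd b" r p]
      by (simp_all add: mem_Times_iff)
    then show ?thesis by simp
  qed
  have "(\<Sum>y\<in>T2 r p. F y * (tm2 r p (padd b y) e :: 'k)) = (if ?y0 \<in> T2 r p then
     (if e \<in> T2 r p \<and> fst b \<le> fst e \<and> snd b \<le> snd e then F ?y0 else 0) else 0)"
    unfolding eq by (rule sum.delta) simp
  then show ?thesis using mem by (simp split: if_splits)
qed

lemma unitv_le: "unitv i \<le> x \<longleftrightarrow> 1 \<le> x i"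
  by (auto simp: unitv_def le_fun_def)

lemma zerom_le[simp]: "zerom \<le> x"
  by (auto simp: zerom_def le_fun_def)

lemma minus_zerom[simp]: "x - zerom = x"
  by (auto simp: zerom_def fun_eq_iff)



lemma madd_sub_unit1: "1 \<le> e1 i \<Longrightarrow> (madd (e1 - unitv i) e2 = a) \<longleftrightarrow> (madd e1 e2 = madd a (unitv i))"
  apply (auto simp: madd_def unitv_def fun_eq_iff)
  done

lemma madd_sub_unit2: "1 \<le> e2 i \<Longrightarrow> (madd e1 (e2 - unitv i) = a) \<longleftrightarrow> (madd e1 e2 = madd a (unitv i))"
  apply (auto simp: madd_def unitv_def fun_eq_iff)
  done

lemma P1:
  assumes i: "i < r" and pr: "prime p" and ch: "p = CHAR('k::comm_ring_1)"
  shows "D r p (madd a (unitv i)) = (mul2 r p (D r p a) (D r p (unitv i)) :: 'k alg2)"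
proof (rule ext)
  fix e :: "mono \<times> mono"
  obtain e1 e2 where e: "e = (e1, e2)" by (cases e)
  have p1: "1 < p" using pr prime_gt_1_nat by blast
  let ?T = "tmonos r p"
  have rhs: "mul2 r p (D r p a) (D r p (unitv i)) e =
     (if e \<in> T2 r p \<and> 1 \<le> e1 i then (D r p a (e1 - unitv i, e2) :: 'k) else 0) +
     (if e \<in> T2 r p \<and> 1 \<le> e2 i then D r p a (e1, e2 - unitv i) else 0)"
    apply (subst mul2_comm)
    apply (simp add: D_unit[OF i p1] mul2_add_left mul2_tm2_left)
    apply (simp add: sum_tm2_shift e unitv_le)
    done
  show "D r p (madd a (unitv i)) e = (mul2 r p (D r p a) (D r p (unitv i)) e :: 'k)"
  proof (cases "e \<in> T2 r p")
    case False
    then have "D r p (madd a (unitv i)) e = (0::'k)" by (rule alg2_out[OF D_alg2])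
    then show ?thesis using rhs False by simp
  next
    case eT: True
    have rhs': "mul2 r p (D r p a) (D r p (unitv i)) e = (if 1 \<le> e1 i then (D r p a (e1 - unitv i, e2) :: 'k) else 0) + (if 1 \<le> e2 i then D r p a (e1, e2 - unitv i) else 0)" using rhs eT by simp
    show ?thesis
    proof (cases "madd e1 e2 = madd a (unitv i)")
      case False
      then show ?thesis using rhs' by (simp add: e D_eval madd_sub_unit1 madd_sub_unit2)
    next
      case s: True
      have si: "e1 i + e2 i = a i + 1"
      proof -
        have "madd e1 e2 i = madd a (unitv i) i" using s by simp
        then show ?thesis by (simp add: madd_def unitv_def)
      qed
      then have sum1: "1 \<le> e1 i + e2 i" by simp
      show ?thesis
      proof (cases "a \<in> ?T")
        case False
        then have "madd a (unitv i) \<notin> ?T" using madd_T1 by blast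
        then show ?thesis using rhs' False by (simp add: e D_eval madd_sub_unit1 madd_sub_unit2)
      next
        case aT: True
        have t1: "1 \<le> e1 i \<Longrightarrow> D r p a (e1 - unitv i, e2) = (of_nat (Bn r (e1 - unitv i) e2) :: 'k)"
          using aT s by (simp add: D_eval madd_sub_unit1)
        have t2: "1 \<le> e2 i \<Longrightarrow> D r p a (e1, e2 - unitv i) = (of_nat (Bn r e1 (e2 - unitv i)) :: 'k)"
          using aT s by (simp add: D_eval madd_sub_unit2)
        have "mul2 r p (D r p a) (D r p (unitv i)) e = (of_nat ((if 1 \<le> e1 i then Bn r (e1 - unitv i) e2 else 0) + (if 1 \<le> e2 i then Bn r e1 (e2 - unitv i) else 0)) :: 'k)"
          using rhs' t1 t2 by (cases "1 \<le> e1 i"; cases "1 \<le> e2 i") simp_all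
        also have "\<dots> = of_nat (Bn r e1 e2)" using pascal_i[of i r e1 e2, OF i sum1] by simp
        finally have R: "mul2 r p (D r p a) (D r p (unitv i)) e = (of_nat (Bn r e1 e2) :: 'k)" .
        show ?thesis
        proof (cases "madd a (unitv i) \<in> ?T")
          case True
          then show ?thesis using R s by (simp add: e D_eval)
        next
          case False
          have ai: "a i < p" using aT i by (auto simp: tmonos_def)
          have "a i + 1 \<ge> p"
          proof (rule ccontr)
            assume "\<not> a i + 1 \<ge> p"
            then have lt: "a i + 1 < p" by simp
            have "madd a (unitv i) \<in> ?T" unfolding tmonos_def
            proof (intro CollectI allI conjI impI)
              fix j
              assume "j < r"
              then show "madd a (unitv i) j < p" using aT lt
                by (cases "j = i") (auto simp: tmonos_def madd_def unitv_def)
            next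
              fix j
              assume "r \<le> j"
              then show "madd a (unitv i) j = 0" using aT i
                by (auto simp: tmonos_def madd_def unitv_def)
            qed
            then show False using False by simp
          qed
          then have api: "a i + 1 = p" using ai by simp
          have eip: "e1 i + e2 i = p" using api si by simp
          have "e1 i < p" "e2 i < p" using eT i e by (auto simp: tmonos_def)
          then have "0 < e1 i" "e1 i < p" using eip by auto
          then have "p dvd (p choose e1 i)" using dvd_choose_prime[of "e1 i" p] pr prime_gt_1_nat[of p] by simp
          then have "p dvd Bn r e1 e2" using Bn_split[OF i, of e1 e2] eip dvd_mult2 by metis
          then have "(of_nat (Bn r e1 e2) :: 'k) = 0" using ch by (simp add: of_nat_eq_0_iff_char_dvd)
          then show ?thesis using R False by (simp add: e D_eval)
        qed
      qed
    qed
  qed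
qed


lemma sum_unitv: "i < r \<Longrightarrow> sum (unitv i) {..<r} = 1"
proof -
  assume i: "i < r"
  have "sum (unitv i) {..<r} = (\<Sum>j\<in>{..<r}. if j = i then 1 else 0)" by (simp add: unitv_def)
  also have "\<dots> = 1" using i by (subst sum.delta) auto
  finally show ?thesis .
qed

lemma DM_T:
  assumes pr: "prime p" and ch: "p = CHAR('k::comm_ring_1)"
  shows "c \<in> tmonos r p \<Longrightarrow> sum c {..<r} = n \<Longrightarrow> D r p (madd a c) = (mul2 r p (D r p a) (D r p c) :: 'k alg2)"
proof (induction n arbitrary: c a)
  case 0
  have p0: "0 < p" using pr prime_gt_0_nat by blast
  have "c = zerom"
  proof (rule ext)
    fix j
    show "c j = zerom j"
    proof (cases "j < r")
      case True
      then show ?thesis using 0 by (simp add: zerom_def)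
    next
      case False
      then show ?thesis using 0 by (simp add: zerom_def tmonos_def)
    qed
  qed
  then show ?case using p0
    by (simp add: D_zero mul2_comm[of r p "D r p a"] mul2_tm2_zero)
next
  case (Suc n)
  have p0: "0 < p" using pr prime_gt_0_nat by blast
  obtain i where i: "i < r" "0 < c i"
  proof -
    have "sum c {..<r} \<noteq> 0" using Suc by simp
    have "\<exists>i\<in>{..<r}. c i \<noteq> 0"
    proof (rule ccontr)
      assume "\<not> (\<exists>i\<in>{..<r}. c i \<noteq> 0)"
      then have "\<forall>x\<in>{..<r}. c x = 0" by simp
      then have "sum c {..<r} = 0" by simp
      then show False using \<open>sum c {..<r} \<noteq> 0\<close> by simp
    qed
    then obtain i where "i \<in> {..<r}" "c i \<noteq> 0" by blast
    then show ?thesis using that by auto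
  qed
  define c' where "c' = c - unitv i"
  have cc: "c = madd c' (unitv i)" using i by (auto simp: c'_def madd_def unitv_def fun_eq_iff)
  have c'T: "c' \<in> tmonos r p" using Suc.prems(1) unfolding cc by (rule madd_T1)
  have "sum c {..<r} = sum c' {..<r} + sum (unitv i) {..<r}"
    by (subst cc) (simp add: madd_def sum.distrib)
  then have sc': "sum c' {..<r} = n" using Suc.prems(2) sum_unitv[OF i(1)] by simp
  have "D r p (madd a c) = (D r p (madd (madd a c') (unitv i)) :: 'k alg2)"
    by (simp add: cc madd_assoc)
  also have "\<dots> = mul2 r p (D r p (madd a c')) (D r p (unitv i))" by (rule P1[OF i(1) pr ch])
  also have "\<dots> = mul2 r p (mul2 r p (D r p a) (D r p c')) (D r p (unitv i))" using Suc.IH[OF c'T sc'] by simp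
  also have "\<dots> = mul2 r p (D r p a) (mul2 r p (D r p c') (D r p (unitv i)))" by (rule mul2_assoc)
  also have "\<dots> = mul2 r p (D r p a) (D r p c)" using P1[OF i(1) pr ch, of c'] cc by simp
  finally show ?case .
qed

lemma DM:
  assumes pr: "prime p" and ch: "p = CHAR('k::comm_ring_1)"
  shows "D r p (madd a c) = (mul2 r p (D r p a) (D r p c) :: 'k alg2)"
proof (cases "c \<in> tmonos r p")
  case True
  then show ?thesis by (rule DM_T[OF pr ch _ refl])
next
  case False
  have n: "madd a c \<notin> tmonos r p"
  proof
    assume "madd a c \<in> tmonos r p"
    then have "c \<in> tmonos r p" by (rule madd_T2)
    then show False using False by simp
  qed
  have "D r p (madd a c) = (\<lambda>_. 0 :: 'k)" by (rule D_out[OF n])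
  moreover have "D r p c = (\<lambda>_. 0 :: 'k)" by (rule D_out[OF False])
  ultimately show ?thesis by simp
qed

definition Bz :: "nat \<Rightarrow> nat \<Rightarrow> mono \<times> mono \<Rightarrow> ('k::comm_ring_1) alg2" where
  "Bz r p z = mul2 r p (D r p (fst z)) (tm2 r p (zerom, snd z))"

lemma twist_eq: "0 < p \<Longrightarrow> twist r p \<alpha> = (\<lambda>e. \<Sum>z\<in>T2 r p. \<alpha> z * Bz r p z e)"
  unfolding twist_def Bz_def
  by (rule ext, rule sum.cong) (auto simp: mon2_eq[where r=r and p=p])

lemma tm2_out: "z \<notin> T2 r p \<Longrightarrow> tm2 r p z = (\<lambda>_. 0)"
  by (auto simp: tm2_def)

lemma Bz_out: "z \<notin> T2 r p \<Longrightarrow> Bz r p z = (\<lambda>_. 0 :: 'k::comm_ring_1)"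
  by (cases z) (auto simp: Bz_def D_out tm2_out)

lemma Bz_if: "(if z \<in> T2 r p then Bz r p z e else 0) = (Bz r p z e :: 'k::comm_ring_1)"
  by (cases "z \<in> T2 r p") (simp_all add: Bz_out)

lemma mul2_swap4: "mul2 r p (mul2 r p A B) (mul2 r p C E) = (mul2 r p (mul2 r p A C) (mul2 r p B E) :: 'k::comm_ring_1 alg2)"
proof -
  have "mul2 r p B (mul2 r p C E) = (mul2 r p C (mul2 r p B E) :: 'k alg2)"
    by (simp add: mul2_assoc[symmetric] mul2_comm[of r p B C])
  then show ?thesis by (simp add: mul2_assoc)
qed

lemma Bz_padd:
  assumes pr: "prime p" and ch: "p = CHAR('k::comm_ring_1)"
  shows "Bz r p (padd x y) = (mul2 r p (Bz r p x) (Bz r p y) :: 'k alg2)"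
proof -
  have t: "tm2 r p (zerom, madd (snd x) (snd y)) = (mul2 r p (tm2 r p (zerom, snd x)) (tm2 r p (zerom, snd y)) :: 'k alg2)"
    by (simp add: mul2_tm2_tm2 padd_def)
  have "Bz r p (padd x y) = (mul2 r p (mul2 r p (D r p (fst x)) (D r p (fst y))) (mul2 r p (tm2 r p (zerom, snd x)) (tm2 r p (zerom, snd y))) :: 'k alg2)"
    unfolding Bz_def padd_def fst_conv snd_conv DM[OF pr ch] t ..
  also have "\<dots> = mul2 r p (Bz r p x) (Bz r p y)"
    unfolding Bz_def by (rule mul2_swap4)
  finally show ?thesis .

qed

lemma twist_mult:
  assumes pr: "prime p" and ch: "p = CHAR('k::comm_ring_1)"
  shows "twist r p (mul2 r p \<alpha> \<beta>) = (mul2 r p (twist r p \<alpha>) (twist r p \<beta>) :: 'k alg2)"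
proof (rule ext)
  fix e
  have p0: "0 < p" using pr prime_gt_0_nat by blast
  let ?T = "T2 r p"
  have "twist r p (mul2 r p \<alpha> \<beta>) e = (\<Sum>z\<in>?T. (\<Sum>x\<in>?T. \<Sum>y\<in>?T. \<alpha> x * \<beta> y * tm2 r p (padd x y) z) * Bz r p z e)"
    by (simp add: twist_eq[OF p0] mul2_expand)
  also have "\<dots> = (\<Sum>z\<in>?T. \<Sum>x\<in>?T. \<Sum>y\<in>?T. \<alpha> x * \<beta> y * (tm2 r p (padd x y) z * Bz r p z e))"
    by (simp add: sum_distrib_right mult.assoc)
  also have "\<dots> = (\<Sum>x\<in>?T. \<Sum>y\<in>?T. \<Sum>z\<in>?T. \<alpha> x * \<beta> y * (tm2 r p (padd x y) z * Bz r p z e))"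
    by (rule sum_swap3[symmetric])
  also have "\<dots> = (\<Sum>x\<in>?T. \<Sum>y\<in>?T. \<alpha> x * \<beta> y * Bz r p (padd x y) e)"
    by (simp add: sum_tm2 Bz_if flip: sum_distrib_left)
  also have "\<dots> = (\<Sum>x\<in>?T. \<Sum>y\<in>?T. \<alpha> x * \<beta> y * mul2 r p (Bz r p x) (Bz r p y) e)"
    by (simp add: Bz_padd[OF pr ch])
  also have "\<dots> = mul2 r p (twist r p \<alpha>) (twist r p \<beta>) e"
    by (simp add: twist_eq[OF p0] mul2_sum_left mul2_sum_right sum_distrib_left mult.assoc)
  finally show "twist r p (mul2 r p \<alpha> \<beta>) e = mul2 r p (twist r p \<alpha>) (twist r p \<beta>) e" .
qed



lemma twist_alg2[simp]: "twist r p (\<alpha> :: 'k::comm_ring_1 alg2) \<in> alg2 r p"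
  unfolding alg2_def twist_def
proof (intro CollectI allI impI)
  fix ab assume ab: "ab \<notin> T2 r p"
  have "\<And>cd. mul2 r p (DeltaLie r p (mon (fst cd))) (mon2 (zerom, snd cd)) ab = (0::'k)"
    using ab by (cases ab) (auto simp: mul2_def)
  then show "(\<Sum>cd\<in>T2 r p. \<alpha> cd * mul2 r p (DeltaLie r p (mon (fst cd))) (mon2 (zerom, snd cd)) ab) = 0"
    by simp
qed

lemma twist_sum: "0 < p \<Longrightarrow> twist r p (\<lambda>ab. \<Sum>s\<in>S. c s * f s ab) = (\<lambda>e. \<Sum>s\<in>S. (c s :: 'k::comm_ring_1) * twist r p (f s) e)"
proof (rule ext)
  fix e assume p0: "0 < p"
  have "twist r p (\<lambda>ab. \<Sum>s\<in>S. c s * f s ab) e = (\<Sum>z\<in>T2 r p. (\<Sum>s\<in>S. c s * f s z) * Bz r p z e)"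
    by (simp add: twist_eq[OF p0])
  also have "\<dots> = (\<Sum>z\<in>T2 r p. \<Sum>s\<in>S. c s * (f s z * Bz r p z e))"
    by (simp add: sum_distrib_right mult.assoc)
  also have "\<dots> = (\<Sum>s\<in>S. \<Sum>z\<in>T2 r p. c s * (f s z * Bz r p z e))"
    by (rule sum.swap)
  also have "\<dots> = (\<Sum>s\<in>S. c s * twist r p (f s) e)"
    by (simp add: twist_eq[OF p0] sum_distrib_left)
  finally show "twist r p (\<lambda>ab. \<Sum>s\<in>S. c s * f s ab) e = (\<Sum>s\<in>S. c s * twist r p (f s) e)" .
qed

lemma twist_add: "0 < p \<Longrightarrow> twist r p (\<lambda>ab. u ab + v ab) = (\<lambda>e. twist r p u e + (twist r p v e :: 'k::comm_ring_1))"
  by (rule ext) (simp add: twist_eq distrib_right sum.distrib)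

lemma twist_diff: "0 < p \<Longrightarrow> twist r p (\<lambda>ab. u ab - v ab) = (\<lambda>e. twist r p u e - (twist r p v e :: 'k::comm_ring_1))"
  by (rule ext) (simp add: twist_eq left_diff_distrib sum_subtractf)

lemma twist_zero[simp]: "twist r p (\<lambda>_. 0) = (\<lambda>_. 0 :: 'k::comm_ring_1)"
  by (rule ext) (simp add: twist_def)

lemma twist_tm2: "0 < p \<Longrightarrow> twist r p (tm2 r p z) = (Bz r p z :: 'k::comm_ring_1 alg2)"
  by (rule ext) (simp add: twist_eq sum_tm2 Bz_if)

lemma Bz_left: "0 < p \<Longrightarrow> Bz r p (a, zerom) = (D r p a :: 'k::comm_ring_1 alg2)"
  unfolding Bz_def by (simp add: mul2_comm[of r p "D r p a"] mul2_tm2_zero)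

lemma Bz_right: "0 < p \<Longrightarrow> Bz r p (zerom, d) = (tm2 r p (zerom, d) :: 'k::comm_ring_1 alg2)"
  unfolding Bz_def by (simp add: D_zero mul2_tm2_tm2 padd_def)

lemma yz_eq: "i < r \<Longrightarrow> 1 < p \<Longrightarrow> yz i = (\<lambda>ab. tm2 r p (unitv i, zerom) ab - (tm2 r p (zerom, unitv i) ab :: 'k::comm_ring_1))"
  by (rule ext) (simp add: yz_def mon2_eq[where r=r and p=p])

lemma twist_yz: "i < r \<Longrightarrow> 1 < p \<Longrightarrow> twist r p (yz i) = (tm2 r p (unitv i, zerom) :: 'k::comm_ring_1 alg2)"
proof -
  assume i: "i < r" and p1: "1 < p"
  have p0: "0 < p" using p1 by simp
  have "twist r p (yz i) = (\<lambda>e. twist r p (tm2 r p (unitv i, zerom)) e - (twist r p (tm2 r p (zerom, unitv i)) e :: 'k))"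
    unfolding yz_eq[OF i p1] by (rule twist_diff[OF p0])
  also have "\<dots> = (\<lambda>e. D r p (unitv i) e - tm2 r p (zerom, unitv i) e)"
    unfolding twist_tm2[OF p0] Bz_left[OF p0] Bz_right[OF p0] ..
  also have "\<dots> = tm2 r p (unitv i, zerom)"
    unfolding D_unit[OF i p1] by simp
  finally show ?thesis .
qed

lemma twist_one2: "0 < p \<Longrightarrow> twist r p one2 = (one2 :: 'k::comm_ring_1 alg2)"
  by (simp add: one2_eq[where r=r] twist_tm2 Bz_left D_zero)

lemma twist_pow2:
  assumes pr: "prime p" and ch: "p = CHAR('k::comm_ring_1)"
  shows "twist r p (pow2 r p u n) = (pow2 r p (twist r p u) n :: 'k alg2)"
proof (induction n)
  case 0
  have p0: "0 < p" using pr prime_gt_0_nat by blast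
  then show ?case by (simp add: pow2_def twist_one2)
next
  case (Suc n)
  have a: "pow2 r p u (Suc n) = mul2 r p u (pow2 r p u n)" for u :: "'k alg2" by (simp add: pow2_def)
  show ?case unfolding a twist_mult[OF pr ch] Suc.IH ..
qed

lemma twist_coef:
  assumes pr: "prime p" and ch: "p = CHAR('k::comm_ring_1)" and i: "i < r"
  shows "twist r p (coefQ r p i j) = (coefP r p i j :: 'k alg2)"
proof -
  have p1: "1 < p" using pr prime_gt_1_nat by blast
  have m: "mon2 (unitv i, zerom) = (tm2 r p (unitv i, zerom) :: 'k alg2)"
    using p1 i by (simp add: mon2_eq)
  show ?thesis
    by (simp add: coefQ_def coefP_def twist_pow2[OF pr ch] twist_yz[OF i p1] m)
qed

lemma psi_chain:
  assumes pr: "prime p" and ch: "p = CHAR('k::comm_ring_1)"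
  shows "dP r p (\<lambda>J. twist r p (w J)) = (\<lambda>J. twist r p (dQ r p w J) :: 'k alg2)"
proof (rule ext)+
  fix J e
  have p0: "0 < p" using pr prime_gt_0_nat by blast
  have "twist r p (dQ r p w J) e = (\<Sum>i<r. ksign J i * twist r p (mul2 r p (coefQ r p i (J i)) (w (madd J (unitv i)))) e)"
    unfolding dQ_def by (simp add: twist_sum[OF p0])
  also have "\<dots> = (\<Sum>i<r. ksign J i * mul2 r p (coefP r p i (J i)) (twist r p (w (madd J (unitv i)))) e)"
    by (rule sum.cong) (simp_all add: twist_mult[OF pr ch] twist_coef[OF pr ch])
  also have "\<dots> = dP r p (\<lambda>J. twist r p (w J)) J e"
    by (simp add: dP_def)
  finally show "dP r p (\<lambda>J. twist r p (w J)) J e = (twist r p (dQ r p w J) e :: 'k)" by simp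
qed

lemma mulA_mon: "a \<in> tmonos r p \<Longrightarrow> b \<in> tmonos r p \<Longrightarrow>
  mulA r p (mon a) (mon b) e = (if e \<in> tmonos r p \<and> madd a b = e then 1 else (0::'k::comm_ring_1))"
proof -
  assume a: "a \<in> tmonos r p" and b: "b \<in> tmonos r p"
  have inner: "(\<Sum>bb\<in>tmonos r p. if madd aa bb = e then mon a aa * mon b bb else 0) = (if aa = a \<and> madd a b = e then 1 else (0::'k))" for aa
  proof -
    have eq: "(\<lambda>bb. if madd aa bb = e then mon a aa * mon b bb else (0::'k)) = (\<lambda>bb. if bb = b then (if aa = a \<and> madd a b = e then 1 else 0) else 0)"
      by (rule ext) (auto simp: mon_def)
    show ?thesis unfolding eq using b by (simp add: sum.delta)
  qed
  have eq2: "(\<lambda>aa. if aa = a \<and> madd a b = e then 1 else (0::'k)) = (\<lambda>aa. if aa = a then (if madd a b = e then 1 else 0) else 0)"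
    by auto
  show ?thesis unfolding mulA_def inner eq2 using a by (simp add: sum.delta)
qed

lemma Bn_zero_left: "Bn r zerom v = 1"
  by (simp add: Bn_def zerom_def)

lemma Bz_at0: "0 < p \<Longrightarrow> c \<in> tmonos r p \<Longrightarrow> d \<in> tmonos r p \<Longrightarrow>
   Bz r p (c, d) (zerom, b) = (if b \<in> tmonos r p \<and> madd c d = b then 1 else (0::'k::comm_ring_1))"
proof -
  assume p0: "0 < p" and c: "c \<in> tmonos r p" and d: "d \<in> tmonos r p"
  have "Bz r p (c, d) (zerom, b) = mul2 r p (tm2 r p (zerom, d)) (D r p c) (zerom, b)"
    unfolding Bz_def by (simp add: mul2_comm[of r p "D r p c"])
  also have "\<dots> = (if (zerom, b) \<in> T2 r p \<and> d \<le> b then D r p c (zerom, b - d) else (0::'k))"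
    by (simp add: mul2_tm2_left sum_tm2_shift mult.commute)
  also have "\<dots> = (if b \<in> tmonos r p \<and> madd c d = b then 1 else 0)"
  proof -
    have "(d \<le> b \<and> b - d = c) \<longleftrightarrow> madd c d = b" using madd_eq_iff[of d c b] by (auto simp: madd_comm)
    then show ?thesis using p0 c by (auto simp: D_eval Bn_zero_left)
  qed
  finally show ?thesis .
qed

lemma twist_mu: "0 < p \<Longrightarrow> twist r p \<alpha> (zerom, b) = (mu r p \<alpha> b :: 'k::comm_ring_1)"
  unfolding mu_def twist_eq
  by (rule sum.cong) (auto simp: Bz_at0 mulA_mon)



lemma one2_alg2[simp]: "0 < p \<Longrightarrow> (one2 :: 'k::comm_ring_1 alg2) \<in> alg2 r p"
  by (simp add: one2_eq[where r=r])

lemma existence: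
  assumes pr: "prime p" and ch: "p = CHAR('k::comm_ring_1)"
  shows "comparison r p (\<lambda>n (w :: 'k cx) J. twist r p (w J))"
proof -
  have p0: "0 < p" using pr prime_gt_0_nat by blast
  show ?thesis
    unfolding comparison_def
  proof (intro conjI allI ballI)
    fix n and w :: "'k cx" assume w: "w \<in> cx r p n"
    then show "(\<lambda>J. twist r p (w J)) \<in> cx r p n" by (simp add: cx_def)
  next
    fix n and w v :: "'k cx" assume "w \<in> cx r p n" "v \<in> cx r p n"
    show "(\<lambda>J. twist r p (addC w v J)) = addC (\<lambda>J. twist r p (w J)) (\<lambda>J. twist r p (v J))"
      by (simp add: addC_def twist_add[OF p0])
  next
    fix n and w :: "'k cx" and \<alpha> :: "'k alg2" assume "\<alpha> \<in> alg2 r p" "w \<in> cx r p n"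
    show "(\<lambda>J. twist r p (actQ r p \<alpha> w J)) = actC r p \<alpha> (\<lambda>J. twist r p (w J))"
      by (simp add: actQ_def actC_def twist_mult[OF pr ch])
  next
    fix n and w :: "'k cx" assume "w \<in> cx r p (Suc n)"
    show "dP r p (\<lambda>J. twist r p (w J)) = (\<lambda>J. twist r p (dQ r p w J))"
      by (rule psi_chain[OF pr ch])
  next
    fix w :: "'k cx" assume "w \<in> cx r p 0"
    show "epsP (\<lambda>J. twist r p (w J)) = muQ r p w"
      by (rule ext) (simp add: epsP_def muQ_def twist_mu[OF p0])
  qed
qed

definition EK :: "mono \<Rightarrow> ('k::comm_ring_1) cx" where
  "EK K = (\<lambda>J. if J = K then one2 else (\<lambda>_. 0))"

definition sumC :: "'a set \<Rightarrow> ('a \<Rightarrow> ('k::comm_ring_1) cx) \<Rightarrow> 'k cx" where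
  "sumC S F = (\<lambda>J e. \<Sum>K\<in>S. F K J e)"

lemma zero_alg2[simp]: "(\<lambda>_. 0) \<in> alg2 r p"
  by (simp add: alg2_def)

lemma EK_cx: "0 < p \<Longrightarrow> K \<in> idx r n \<Longrightarrow> EK K \<in> cx r p n"
  by (auto simp: EK_def cx_def one2_alg2)

lemma actQ_cx: "w \<in> cx r p n \<Longrightarrow> actQ r p \<alpha> w \<in> cx r p n"
  by (auto simp: actQ_def cx_def)

lemma cx_alg2: "w \<in> cx r p n \<Longrightarrow> w J \<in> alg2 r p"
  by (simp add: cx_def)

lemma cx_out: "w \<in> cx r p n \<Longrightarrow> J \<notin> idx r n \<Longrightarrow> w J e = 0"
  by (simp add: cx_def)

lemma sumC_cx: "(\<And>K. K \<in> S \<Longrightarrow> F K \<in> cx r p n) \<Longrightarrow> sumC S F \<in> cx r p n"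
  unfolding cx_def sumC_def
proof (intro CollectI conjI allI impI)
  fix J assume "\<And>K. K \<in> S \<Longrightarrow> F K \<in> {w. (\<forall>J. J \<notin> idx r n \<longrightarrow> w J = (\<lambda>_. 0)) \<and> (\<forall>J. w J \<in> alg2 r p)}"
  then have h: "\<And>K. K \<in> S \<Longrightarrow> F K \<in> cx r p n" by (simp add: cx_def)
  {
    assume "J \<notin> idx r n"
    then show "(\<lambda>e. \<Sum>K\<in>S. F K J e) = (\<lambda>_. 0)" using h cx_out by (intro ext sum.neutral) blast
  }
  show "(\<lambda>e. \<Sum>K\<in>S. F K J e) \<in> alg2 r p"
    unfolding alg2_def
  proof (intro CollectI allI impI)
    fix e assume e: "e \<notin> T2 r p"
    show "(\<Sum>K\<in>S. F K J e) = 0"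
      by (rule sum.neutral) (use e h alg2_out[OF cx_alg2] in blast)
  qed
qed

lemma sumC_insert: "finite S \<Longrightarrow> a \<notin> S \<Longrightarrow> sumC (insert a S) F = addC (F a) (sumC S F)"
  by (simp add: sumC_def addC_def)

lemma psi_zero:
  assumes c: "comparison r p \<Psi>"
  shows "\<Psi> n (\<lambda>J e. 0) = (\<lambda>J e. (0::'k::comm_ring_1))"
proof -
  have z: "(\<lambda>J e. 0::'k) \<in> cx r p n" by (simp add: cx_def)
  have "addC (\<lambda>J e. 0::'k) (\<lambda>J e. 0) = (\<lambda>J e. 0)" by (simp add: addC_def)
  then have "\<Psi> n (\<lambda>J e. 0) = addC (\<Psi> n (\<lambda>J e. 0)) (\<Psi> n (\<lambda>J e. 0))"
    using c z unfolding comparison_def by metis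
  then have "\<Psi> n (\<lambda>J e. 0) J e = addC (\<Psi> n (\<lambda>J e. 0)) (\<Psi> n (\<lambda>J e. 0)) J e" for J e
    by (rule fun_cong[OF fun_cong])
  then have "\<Psi> n (\<lambda>J e. 0) J e = \<Psi> n (\<lambda>J e. 0) J e + \<Psi> n (\<lambda>J e. 0) J e" for J e
    by (simp add: addC_def)
  then show ?thesis by (intro ext) simp
qed

lemma psi_sumC:
  assumes c: "comparison r p \<Psi>" and fin: "finite S"
  shows "(\<And>K. K \<in> S \<Longrightarrow> F K \<in> cx r p n) \<Longrightarrow> \<Psi> n (sumC S F) = sumC S (\<lambda>K. \<Psi> n (F K :: 'k::comm_ring_1 cx))"
  using fin
proof (induction S rule: finite_induct)
  case empty
  then show ?case using psi_zero[OF c] by (simp add: sumC_def)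
next
  case (insert a S)
  have "\<Psi> n (sumC (insert a S) F) = \<Psi> n (addC (F a) (sumC S F))" using insert by (simp add: sumC_insert)
  also have "\<dots> = addC (\<Psi> n (F a)) (\<Psi> n (sumC S F))"
    using c insert.prems sumC_cx[of S F r p n] unfolding comparison_def by auto
  also have "\<dots> = addC (\<Psi> n (F a)) (sumC S (\<lambda>K. \<Psi> n (F K)))" using insert by simp
  also have "\<dots> = sumC (insert a S) (\<lambda>K. \<Psi> n (F K))" using insert by (simp add: sumC_insert)
  finally show ?case .
qed

lemma decomp:
  assumes p0: "0 < p" and v: "v \<in> cx r p n"
  shows "v = sumC (idx r n) (\<lambda>K. actQ r p (v K) (EK K :: 'k::comm_ring_1 cx))"
proof (rule ext)+
  fix J e
  have "sumC (idx r n) (\<lambda>K. actQ r p (v K) (EK K :: 'k cx)) J e = (\<Sum>K\<in>idx r n. if K = J then mul2 r p (v J) one2 e else 0)"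
    unfolding sumC_def actQ_def EK_def by (rule sum.cong) auto
  also have "\<dots> = (if J \<in> idx r n then mul2 r p (v J) one2 e else 0)" by (simp add: sum.delta')
  also have "\<dots> = v J e"
    using v cx_out[OF v] cx_alg2[OF v] p0
    by (auto simp: one2_eq[where r=r] mul2_comm[of r p "v J"] mul2_tm2_zero)
  finally show "v J e = sumC (idx r n) (\<lambda>K. actQ r p (v K) (EK K :: 'k cx)) J e" by simp
qed

lemma psi_decomp:
  assumes c: "comparison r p \<Psi>" and p0: "0 < p" and v: "v \<in> cx r p n"
  shows "\<Psi> n v = (\<lambda>J e. \<Sum>K\<in>idx r n. mul2 r p (twist r p (v K)) (\<Psi> n (EK K) J) (e :: mono \<times> mono) :: 'k::comm_ring_1)"
proof -
  have "\<Psi> n v = \<Psi> n (sumC (idx r n) (\<lambda>K. actQ r p (v K) (EK K)))" using decomp[OF p0 v] by metis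
  also have "\<dots> = sumC (idx r n) (\<lambda>K. \<Psi> n (actQ r p (v K) (EK K)))"
    by (rule psi_sumC[OF c finite_idx]) (simp add: actQ_cx EK_cx[OF p0])
  also have "\<dots> = sumC (idx r n) (\<lambda>K. actC r p (v K) (\<Psi> n (EK K)))"
  proof -
    have act: "\<And>K. K \<in> idx r n \<Longrightarrow> \<Psi> n (actQ r p (v K) (EK K)) = actC r p (v K) (\<Psi> n (EK K))"
      using c cx_alg2[OF v] EK_cx[OF p0] unfolding comparison_def by blast
    show ?thesis by (auto simp: sumC_def act intro!: ext sum.cong)
  qed
  finally show ?thesis by (simp add: sumC_def actC_def)
qed



lemma shiftL: "mul2 r p (tm2 r p (a, zerom)) Y (e1, e2) = (if (e1, e2) \<in> T2 r p \<and> a \<le> e1 then Y (e1 - a, e2) else (0::'k::comm_ring_1))"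
  by (simp add: mul2_tm2_left sum_tm2_shift)

lemma pow2_tm2: "0 < p \<Longrightarrow> pow2 r p (tm2 r p (a, zerom)) n = (tm2 r p ((\<lambda>t. n * a t), zerom) :: 'k::comm_ring_1 alg2)"
proof (induction n)
  case 0
  then show ?case by (simp add: pow2_def one2_eq[where r=r] zerom_def)
next
  case (Suc n)
  have "pow2 r p (tm2 r p (a, zerom)) (Suc n) = mul2 r p (tm2 r p (a, zerom)) (pow2 r p (tm2 r p (a, zerom)) n :: 'k alg2)"
    by (simp add: pow2_def)
  also have "\<dots> = tm2 r p (padd (a, zerom) ((\<lambda>t. n * a t), zerom))" using Suc by (simp add: mul2_tm2_tm2)
  also have "padd (a, zerom) ((\<lambda>t. n * a t), zerom) = ((\<lambda>t. Suc n * a t), zerom)"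
    by (simp add: padd_def madd_def zerom_def)
  finally show ?case .
qed

definition cm :: "nat \<Rightarrow> nat \<Rightarrow> nat \<Rightarrow> mono" where
  "cm p m j = (\<lambda>t. (if even j then 1 else p - 1) * unitv m t)"

lemma coefP_tm2: "m < r \<Longrightarrow> 1 < p \<Longrightarrow> coefP r p m j = (tm2 r p (cm p m j, zerom) :: 'k::comm_ring_1 alg2)"
  by (auto simp: coefP_def cm_def pow2_tm2 mon2_eq[where r=r and p=p])

lemma cm_le: "m < r \<Longrightarrow> 1 < p \<Longrightarrow> cm p m j \<le> x \<Longrightarrow> 1 \<le> x m"
  unfolding cm_def le_fun_def by (drule spec[of _ m]) (auto simp: unitv_def split: if_splits)

lemma ksign_zero[simp]: "ksign zerom l = 1"
  by (simp add: ksign_def zerom_def)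

lemma zerom_idx0: "zerom \<in> idx r 0"
  by (simp add: idx_def zerom_def)

lemma idx0: "idx r 0 = {zerom}"
proof -
  have "J = zerom" if "J \<in> idx r 0" for J
  proof (rule ext)
    fix j show "J j = zerom j"
      using that by (cases "j < r") (auto simp: idx_def zerom_def)
  qed
  then show ?thesis using zerom_idx0 by blast
qed

lemma mu_one2: "0 < p \<Longrightarrow> mu r p one2 b = (if b = zerom then 1 else (0::'k::comm_ring_1))"
  by (simp add: mu_def one2_eq[where r=r] sum_tm2 mulA_mon)

lemma mu_out: "b \<notin> tmonos r p \<Longrightarrow> mu r p u b = (0::'k::comm_ring_1)"
  by (simp add: mu_def mulA_def)

lemma dP_mul2: "mul2 r p (dP r p X J) Y = (dP r p (\<lambda>K. mul2 r p (X K) Y) J :: 'k::comm_ring_1 alg2)"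
proof (rule ext)
  fix e
  have "dP r p X J = (\<lambda>ab. \<Sum>l<r. ksign J l * mul2 r p (coefP r p l (J l)) (X (madd J (unitv l))) ab)"
    by (simp add: dP_def)
  then show "mul2 r p (dP r p X J) Y e = dP r p (\<lambda>K. mul2 r p (X K) Y) J e"
    by (simp add: mul2_sum_left mul2_assoc dP_def)
qed

lemma madd_sub_self: "madd x y - y = x"
  by (simp add: madd_def fun_eq_iff)

lemma unitv_le_madd: "i < r \<Longrightarrow> l < r \<Longrightarrow> (\<forall>t. t \<noteq> i \<longrightarrow> x t = 0) \<Longrightarrow> unitv l \<le> madd x (unitv i) \<longleftrightarrow> l = i"
  unfolding unitv_le by (auto simp: madd_def unitv_def)

lemma dP_zero_eval:
  assumes i: "i < r" and p1: "1 < p" and x: "\<forall>t. t \<noteq> i \<longrightarrow> x t = 0" and xT: "madd x (unitv i) \<in> tmonos r p" and d: "d \<in> tmonos r p"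
  shows "dP r p X zerom (madd x (unitv i), d) = (X (unitv i) (x, d) :: 'k::comm_ring_1)"
proof -
  have "dP r p X zerom (madd x (unitv i), d) = (\<Sum>l<r. if l = i then X (unitv i) (x, d) else 0)"
    unfolding dP_def
  proof (rule sum.cong[OF refl])
    fix l assume l: "l \<in> {..<r}"
    have c: "coefP r p l (zerom l) = (tm2 r p (unitv l, zerom) :: 'k alg2)"
      using l p1 by (simp add: coefP_tm2 cm_def zerom_def)
    show "ksign zerom l * mul2 r p (coefP r p l (zerom l)) (X (madd zerom (unitv l))) (madd x (unitv i), d) = (if l = i then X (unitv i) (x, d) else 0)"
      using l i x xT d by (simp add: c shiftL unitv_le_madd madd_sub_self)
  qed
  also have "\<dots> = X (unitv i) (x, d)" using i by (simp add: sum.delta)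
  finally show ?thesis .
qed

lemma dQ_cx:
  assumes w: "w \<in> cx r p (Suc n)"
  shows "dQ r p w \<in> cx r p n"
  unfolding cx_def
proof (intro CollectI conjI allI impI)
  fix J assume J: "J \<notin> idx r n"
  have "madd J (unitv i) \<notin> idx r (Suc n)" if "i < r" for i
  proof
    assume h: "madd J (unitv i) \<in> idx r (Suc n)"
    have "\<forall>j. r \<le> j \<longrightarrow> J j = 0" using h that by (auto simp: idx_def madd_def unitv_def)
    moreover have "(\<Sum>j<r. J j) = n"
    proof -
      have "(\<Sum>j<r. madd J (unitv i) j) = (\<Sum>j<r. J j) + sum (unitv i) {..<r}"
        by (simp add: madd_def sum.distrib)
      then show ?thesis using h sum_unitv[OF that] by (simp add: idx_def)
    qed
    ultimately show False using J by (simp add: idx_def)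
  qed
  then have z: "\<And>i. i < r \<Longrightarrow> w (madd J (unitv i)) = (\<lambda>_. 0)" using w by (simp add: cx_def)
  show "dQ r p w J = (\<lambda>_. 0)"
    unfolding dQ_def by (intro ext sum.neutral ballI) (simp add: z)
next
  fix J
  show "dQ r p w J \<in> alg2 r p"
    unfolding alg2_def dQ_def
  proof (intro CollectI allI impI sum.neutral ballI)
    fix ab i assume "ab \<notin> T2 r p"
    then show "ksign J i * mul2 r p (coefQ r p i (J i)) (w (madd J (unitv i))) ab = 0"
      by (simp add: alg2_out[OF mul2_alg2])
  qed
qed

lemma u0_facts:
  assumes c: "comparison r p \<Psi>" and p0: "0 < p"
  shows "\<Psi> 0 (EK zerom) zerom \<in> alg2 r p" "\<Psi> 0 (EK zerom) zerom (zerom, b) = (if b = zerom then 1 else (0::'k::comm_ring_1))"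
proof -
  have E: "(EK zerom :: 'k cx) \<in> cx r p 0" by (rule EK_cx[OF p0 zerom_idx0])
  then show "\<Psi> 0 (EK zerom) zerom \<in> alg2 r p" using c by (auto simp: comparison_def cx_def)
  have "epsP (\<Psi> 0 (EK zerom)) = muQ r p (EK zerom :: 'k cx)" using c E by (simp add: comparison_def)
  then have "epsP (\<Psi> 0 (EK zerom)) b = muQ r p (EK zerom :: 'k cx) b" by simp
  then show "\<Psi> 0 (EK zerom) zerom (zerom, b) = (if b = zerom then 1 else (0::'k))"
    by (simp add: epsP_def muQ_def EK_def mu_one2[OF p0])
qed

lemma evalY:
  assumes Y: "Y \<in> alg2 r p" and pt: "pt \<in> T2 r p"
  shows "mul2 r p Z Y pt = (\<Sum>y\<in>T2 r p. Y y * (if fst y \<le> fst pt \<and> snd y \<le> snd pt then Z (fst pt - fst y, snd pt - snd y) else (0::'k::comm_ring_1)))"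
proof -
  have Ye: "Y = (\<lambda>e. \<Sum>z\<in>T2 r p. Y z * tm2 r p z e)" by (rule ext) (rule alg2_expand[OF Y])
  have "mul2 r p Z Y pt = mul2 r p Y Z pt" by (simp add: mul2_comm)
  also have "\<dots> = (\<Sum>y\<in>T2 r p. Y y * mul2 r p (tm2 r p y) Z pt)"
    by (subst Ye) (rule mul2_sum_left)
  also have "\<dots> = (\<Sum>y\<in>T2 r p. Y y * (if fst y \<le> fst pt \<and> snd y \<le> snd pt then Z (fst pt - fst y, snd pt - snd y) else 0))"
    using pt by (simp add: mul2_tm2_left sum_tm2_shift)
  finally show ?thesis .
qed

lemma mul2_u0:
  assumes u: "u \<in> alg2 r p" and uz: "\<And>b'. u (zerom, b') = (if b' = zerom then 1 else (0::'k::comm_ring_1))"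
    and b: "b \<in> tmonos r p" and p0: "0 < p"
  shows "mul2 r p Z u (zerom, b) = Z (zerom, b)"
proof -
  have "mul2 r p Z u (zerom, b) = (\<Sum>y\<in>T2 r p. u y * (if fst y \<le> fst (zerom, b) \<and> snd y \<le> snd (zerom, b) then Z (fst (zerom, b) - fst y, snd (zerom, b) - snd y) else 0))"
    by (rule evalY[OF u]) (use b p0 in simp)
  also have "\<dots> = (\<Sum>y\<in>T2 r p. if y = (zerom, zerom) then Z (zerom, b) else 0)"
  proof (rule sum.cong[OF refl])
    fix y assume "y \<in> T2 r p"
    show "u y * (if fst y \<le> fst (zerom, b) \<and> snd y \<le> snd (zerom, b) then Z (fst (zerom, b) - fst y, snd (zerom, b) - snd y) else 0) =
          (if y = (zerom, zerom) then Z (zerom, b) else 0)"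
    proof (cases "fst y = zerom")
      case True
      then show ?thesis using uz[of "snd y"] by (cases y) auto
    next
      case False
      then have "\<not> fst y \<le> zerom" by (auto simp: le_fun_def zerom_def fun_eq_iff)
      then show ?thesis using False by auto
    qed
  qed
  also have "\<dots> = Z (zerom, b)" using b p0 by (simp add: sum.delta)
  finally show ?thesis .
qed



lemma comp_cx: "comparison r p \<Psi> \<Longrightarrow> w \<in> cx r p n \<Longrightarrow> \<Psi> n w \<in> cx r p n"
  by (simp add: comparison_def)

lemma comp_chain: "comparison r p \<Psi> \<Longrightarrow> w \<in> cx r p (Suc n) \<Longrightarrow> dP r p (\<Psi> (Suc n) w) = \<Psi> n (dQ r p w)"
  by (simp add: comparison_def)

lemma unitv_T': "i < r \<Longrightarrow> 1 < p \<Longrightarrow> madd zerom (unitv i) \<in> tmonos r p"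
  by simp

lemma deg1:
  assumes c: "comparison r p \<Psi>" and pr: "prime p" and ch: "p = CHAR('k::comm_ring_1)"
    and i: "i < r" and w: "w \<in> cx r p (Suc 0)"
  shows "\<Psi> (Suc 0) w (unitv i) (zerom, b) = (mu r p (w (unitv i)) b :: 'k)"
proof -
  have p0: "0 < p" using pr prime_gt_0_nat by blast
  have p1: "1 < p" using pr prime_gt_1_nat by blast
  define u0 where "u0 = \<Psi> 0 (EK zerom) zerom"
  have u0a: "u0 \<in> alg2 r p" unfolding u0_def by (rule u0_facts(1)[OF c p0])
  have u0z: "\<And>b'. u0 (zerom, b') = (if b' = zerom then 1 else (0::'k))" unfolding u0_def by (rule u0_facts(2)[OF c p0])
  show ?thesis
  proof (cases "b \<in> tmonos r p")
    case False
    have "\<Psi> (Suc 0) w (unitv i) \<in> alg2 r p" by (rule cx_alg2[OF comp_cx[OF c w]])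
    then have "\<Psi> (Suc 0) w (unitv i) (zerom, b) = (0::'k)" using False by (simp add: alg2_out)
    then show ?thesis using False by (simp add: mu_out)
  next
    case b: True
    have dQw: "dQ r p w \<in> cx r p 0" by (rule dQ_cx[OF w])
    have zt: "\<forall>t. t \<noteq> i \<longrightarrow> zerom t = 0" by (simp add: zerom_def)
    have "\<Psi> (Suc 0) w (unitv i) (zerom, b) = dP r p (\<Psi> (Suc 0) w) zerom (madd zerom (unitv i), b)"
      by (rule dP_zero_eval[symmetric]) (use i p1 b zt in simp_all)
    also have "\<dots> = \<Psi> 0 (dQ r p w) zerom (madd zerom (unitv i), b)"
      by (simp add: comp_chain[OF c w])
    also have "\<dots> = mul2 r p (twist r p (dQ r p w zerom)) u0 (madd zerom (unitv i), b)"
      by (simp add: psi_decomp[OF c p0 dQw] idx0 u0_def)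
    also have "twist r p (dQ r p w zerom) = dP r p (\<lambda>J. twist r p (w J)) zerom"
      using psi_chain[OF pr ch, of r w] by (simp add: fun_eq_iff)
    also have "mul2 r p (dP r p (\<lambda>J. twist r p (w J)) zerom) u0 = dP r p (\<lambda>K. mul2 r p (twist r p (w K)) u0) zerom"
      by (rule dP_mul2)
    also have "dP r p (\<lambda>K. mul2 r p (twist r p (w K)) u0) zerom (madd zerom (unitv i), b) = mul2 r p (twist r p (w (unitv i))) u0 (zerom, b)"
      by (rule dP_zero_eval) (use i p1 b zt in simp_all)
    also have "\<dots> = twist r p (w (unitv i)) (zerom, b)"
      by (rule mul2_u0[OF u0a u0z b p0])
    also have "\<dots> = mu r p (w (unitv i)) b"
      by (rule twist_mu[OF p0])
    finally show ?thesis .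
  qed
qed



lemma chain1:
  assumes c: "comparison r p \<Psi>" and pr: "prime p" and ch: "p = CHAR('k::comm_ring_1)"
    and i: "i < r" and v: "v \<in> cx r p (Suc 0)"
    and x: "\<forall>t. t \<noteq> i \<longrightarrow> x t = 0" and xT: "madd x (unitv i) \<in> tmonos r p" and d: "d \<in> tmonos r p"
  shows "\<Psi> (Suc 0) v (unitv i) (x, d) = (mul2 r p (twist r p (v (unitv i))) (\<Psi> 0 (EK zerom) zerom) (x, d) :: 'k)"
proof -
  have p0: "0 < p" using pr prime_gt_0_nat by blast
  have p1: "1 < p" using pr prime_gt_1_nat by blast
  define u0 where "u0 = \<Psi> 0 (EK zerom) zerom"
  have dQv: "dQ r p v \<in> cx r p 0" by (rule dQ_cx[OF v])
  have "\<Psi> (Suc 0) v (unitv i) (x, d) = dP r p (\<Psi> (Suc 0) v) zerom (madd x (unitv i), d)"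
    by (rule dP_zero_eval[symmetric, OF i p1 x xT d])
  also have "\<dots> = \<Psi> 0 (dQ r p v) zerom (madd x (unitv i), d)"
    by (simp add: comp_chain[OF c v])
  also have "\<dots> = mul2 r p (twist r p (dQ r p v zerom)) u0 (madd x (unitv i), d)"
    by (simp add: psi_decomp[OF c p0 dQv] idx0 u0_def)
  also have "twist r p (dQ r p v zerom) = dP r p (\<lambda>J. twist r p (v J)) zerom"
    using psi_chain[OF pr ch, of r v] by (simp add: fun_eq_iff)
  also have "mul2 r p (dP r p (\<lambda>J. twist r p (v J)) zerom) u0 = dP r p (\<lambda>K. mul2 r p (twist r p (v K)) u0) zerom"
    by (rule dP_mul2)
  also have "dP r p (\<lambda>K. mul2 r p (twist r p (v K)) u0) zerom (madd x (unitv i), d) = mul2 r p (twist r p (v (unitv i))) u0 (x, d)"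
    by (rule dP_zero_eval[OF i p1 x xT d])
  finally show ?thesis unfolding u0_def .
qed

lemma unitv_idx1: "i < r \<Longrightarrow> unitv i \<in> idx r (Suc 0)"
  by (simp add: idx_def unitv_def sum.delta)

lemma Vj_vanish:
  assumes c: "comparison r p \<Psi>" and pr: "prime p" and ch: "p = CHAR('k::comm_ring_1)"
    and i: "i < r" and j: "j < r" "j \<noteq> i"
    and x: "\<forall>t. t \<noteq> i \<longrightarrow> x t = 0" and xT: "madd x (unitv i) \<in> tmonos r p" and d: "d \<in> tmonos r p"
  shows "\<Psi> (Suc 0) (EK (unitv j)) (unitv i) (x, d) = (0 :: 'k)"
proof -
  have p0: "0 < p" using pr prime_gt_0_nat by blast
  have E: "(EK (unitv j) :: 'k cx) \<in> cx r p (Suc 0)" by (rule EK_cx[OF p0 unitv_idx1[OF j(1)]])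
  have "(EK (unitv j) :: 'k cx) (unitv i) = (\<lambda>_. 0)"
  proof -
    have "unitv i \<noteq> unitv j" using j by (auto simp: unitv_def fun_eq_iff)
    then show ?thesis by (simp add: EK_def)
  qed
  then show ?thesis using chain1[OF c pr ch i E x xT d] by simp
qed

lemma V_ii:
  assumes c: "comparison r p \<Psi>" and pr: "prime p" and ch: "p = CHAR('k::comm_ring_1)" and i: "i < r"
  shows "\<Psi> (Suc 0) (EK (unitv i)) (unitv i) (zerom, d) = (if d = zerom then 1 else (0 :: 'k))"
proof -
  have p0: "0 < p" using pr prime_gt_0_nat by blast
  have E: "(EK (unitv i) :: 'k cx) \<in> cx r p (Suc 0)" by (rule EK_cx[OF p0 unitv_idx1[OF i]])
  show ?thesis using deg1[OF c pr ch i E, of d] by (simp add: EK_def mu_one2[OF p0])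
qed

lemma ksign_unit: "ksign (unitv i) i = 1"
proof -
  have "(\<Sum>j<i. unitv i j) = 0" by (simp add: unitv_def)
  then show ?thesis by (simp add: ksign_def)
qed

lemma cm_T: "m < r \<Longrightarrow> 1 < p \<Longrightarrow> cm p m j \<in> tmonos r p"
  by (auto simp: cm_def tmonos_def unitv_def)

lemma cm_even: "cm p m 0 = unitv m" by (simp add: cm_def fun_eq_iff)

lemma dP_ei_eval:
  assumes i: "i < r" and p1: "1 < p" and b: "b \<in> tmonos r p"
  shows "dP r p X (unitv i) (cm p i 1, b) = (X (madd (unitv i) (unitv i)) (zerom, b) :: 'k::comm_ring_1)"
proof -
  have "dP r p X (unitv i) (cm p i 1, b) = (\<Sum>l<r. if l = i then X (madd (unitv i) (unitv i)) (zerom, b) else 0)"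
    unfolding dP_def
  proof (rule sum.cong[OF refl])
    fix l assume l: "l \<in> {..<r}"
    have c: "coefP r p l (unitv i l) = (tm2 r p (cm p l (unitv i l), zerom) :: 'k alg2)"
      using l p1 by (simp add: coefP_tm2)
    show "ksign (unitv i) l * mul2 r p (coefP r p l (unitv i l)) (X (madd (unitv i) (unitv l))) (cm p i 1, b) =
          (if l = i then X (madd (unitv i) (unitv i)) (zerom, b) else 0)"
    proof (cases "l = i")
      case True
      have "cm p i (unitv i i) = cm p i 1" by (simp add: unitv_def)
      moreover have "cm p i 1 - cm p i 1 = zerom" by (simp add: zerom_def fun_eq_iff)
      ultimately show ?thesis using True c i p1 b by (simp add: shiftL cm_T ksign_unit)
    next
      case False
      have "\<not> cm p l (unitv i l) \<le> cm p i 1"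
      proof
        assume "cm p l (unitv i l) \<le> cm p i 1"
        then have "1 \<le> cm p i 1 l" using cm_le l p1 by simp
        then show False using False by (simp add: cm_def unitv_def)
      qed
      then show ?thesis using False c by (simp add: shiftL)
    qed
  qed
  also have "\<dots> = X (madd (unitv i) (unitv i)) (zerom, b)" using i by (simp add: sum.delta)
  finally show ?thesis .
qed



lemma Ycl:
  assumes c: "comparison r p \<Psi>" and pr: "prime p" and ch: "p = CHAR('k::comm_ring_1)"
    and i: "i < r" and j: "j < r" and m: "m < r" and b: "b \<in> tmonos r p"
  shows "mul2 r p Z (mul2 r p (coefP r p m (unitv j m)) (\<Psi> (Suc 0) (EK (unitv j)) (unitv i))) (cm p i 1, b)
          = (if j = i \<and> m = i then Z (zerom, b) else (0::'k))"
proof -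
  have p0: "0 < p" using pr prime_gt_0_nat by blast
  have p1: "1 < p" using pr prime_gt_1_nat by blast
  define V where "V = \<Psi> (Suc 0) (EK (unitv j)) (unitv i)"
  define pe where "pe = cm p i 1"
  define cmj where "cmj = cm p m (unitv j m)"
  have C: "coefP r p m (unitv j m) = (tm2 r p (cmj, zerom) :: 'k alg2)" using m p1 by (simp add: coefP_tm2 cmj_def)
  have peT: "pe \<in> tmonos r p" using cm_T[OF i p1] by (simp add: pe_def)
  have pt: "(pe, b) \<in> T2 r p" using peT b by simp
  have pe_out: "pe t = 0" if "t \<noteq> i" for t using that by (simp add: pe_def cm_def unitv_def)
  let ?Y = "mul2 r p (tm2 r p (cmj, zerom)) V"
  have "mul2 r p Z ?Y (pe, b) = (\<Sum>y\<in>T2 r p. ?Y y * (if fst y \<le> fst (pe, b) \<and> snd y \<le> snd (pe, b) then Z (fst (pe, b) - fst y, snd (pe, b) - snd y) else 0))"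
    by (rule evalY[OF mul2_alg2 pt])
  also have "\<dots> = (\<Sum>y\<in>T2 r p. if y = (pe, zerom) then (if j = i \<and> m = i then Z (zerom, b) else 0) else 0)"
  proof (rule sum.cong[OF refl])
    fix y assume yT: "y \<in> T2 r p"
    obtain y1 y2 where y: "y = (y1, y2)" by (cases y)
    have y1T: "y1 \<in> tmonos r p" and y2T: "y2 \<in> tmonos r p" using yT y by auto
    show "?Y y * (if fst y \<le> fst (pe, b) \<and> snd y \<le> snd (pe, b) then Z (fst (pe, b) - fst y, snd (pe, b) - snd y) else 0)
        = (if y = (pe, zerom) then (if j = i \<and> m = i then Z (zerom, b) else 0) else 0)"
    proof (cases "y1 \<le> pe \<and> y2 \<le> b")
      case False
      then have ne: "y \<noteq> (pe, zerom)" using y by auto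
      have "\<not> (fst y \<le> fst (pe, b) \<and> snd y \<le> snd (pe, b))" using False y by simp
      then show ?thesis using ne by (simp only: if_False) simp
    next
      case le: True
      have Yy: "?Y y = (if cmj \<le> y1 then V (y1 - cmj, y2) else 0)" using yT y by (simp add: shiftL)
      show ?thesis
      proof (cases "cmj \<le> y1")
        case False
        have "\<not> (j = i \<and> m = i \<and> y = (pe, zerom))"
        proof
          assume h: "j = i \<and> m = i \<and> y = (pe, zerom)"
          then have "cmj = pe" by (simp add: cmj_def pe_def unitv_def)
          then show False using False h y by simp
        qed
        then show ?thesis using Yy False le y by auto
      next
        case cle: True
        have "1 \<le> y1 m" using cm_le[OF m p1] cle by (simp add: cmj_def)
        moreover have "y1 m \<le> pe m" using le by (simp add: le_fun_def)
        ultimately have mi: "m = i" using pe_out by fastforce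
        show ?thesis
        proof (cases "j = i")
          case False
          have cme: "cmj = unitv i" using mi False by (simp add: cmj_def unitv_def cm_even)
          define x0 where "x0 = y1 - unitv i"
          have x: "\<forall>t. t \<noteq> i \<longrightarrow> x0 t = 0"
          proof (intro allI impI)
            fix t assume "t \<noteq> i"
            moreover have "y1 t \<le> pe t" using le by (simp add: le_fun_def)
            ultimately have "y1 t \<le> 0" using pe_out[of t] by simp
            then show "x0 t = 0" by (simp add: x0_def)
          qed
          have my: "madd x0 (unitv i) = y1" using cle cme by (simp add: x0_def madd_def le_fun_def fun_eq_iff)
          have "V (x0, y2) = 0"
            unfolding V_def by (rule Vj_vanish[OF c pr ch i j(1) False x]) (use my y1T y2T in simp_all)
          then have "V (y1 - unitv i, y2) = 0" by (simp add: x0_def)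
          moreover have "y \<noteq> (pe, zerom) \<or> \<not> (j = i \<and> m = i)" using False by simp
          ultimately show ?thesis using Yy cle cme by auto
        next
          case ji: True
          have cpe: "cmj = pe" using mi ji by (simp add: cmj_def pe_def unitv_def)
          then have y1pe: "y1 = pe" using cle le by (simp add: order_antisym)
          have "pe - pe = zerom" by (simp add: zerom_def fun_eq_iff)
          then have "?Y y = (if y2 = zerom then 1 else 0)"
            using Yy cpe y1pe V_ii[OF c pr ch i] ji by (simp add: V_def)
          then show ?thesis using le y y1pe ji mi \<open>pe - pe = zerom\<close> by auto
        qed
      qed
    qed
  qed
  also have "\<dots> = (if j = i \<and> m = i then Z (zerom, b) else 0)"
    using peT p0 by (simp add: sum.delta)
  finally show ?thesis unfolding C V_def pe_def .
qed

lemma idx1: "idx r (Suc 0) = unitv ` {..<r}"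
proof
  show "unitv ` {..<r} \<subseteq> idx r (Suc 0)" using unitv_idx1 by blast
next
  show "idx r (Suc 0) \<subseteq> unitv ` {..<r}"
  proof
    fix J assume J: "J \<in> idx r (Suc 0)"
    then have s: "(\<Sum>j<r. J j) = 1" and out: "\<forall>j. r \<le> j \<longrightarrow> J j = 0" by (auto simp: idx_def)
    have "\<exists>i\<in>{..<r}. J i \<noteq> 0"
    proof (rule ccontr)
      assume "\<not> (\<exists>i\<in>{..<r}. J i \<noteq> 0)"
      then have "(\<Sum>j<r. J j) = 0" by simp
      then show False using s by simp
    qed
    then obtain i where i: "i < r" "J i \<noteq> 0" by blast
    have split: "(\<Sum>j<r. J j) = J i + (\<Sum>j\<in>{..<r}-{i}. J j)"
      using i by (subst sum.remove[of _ i]) auto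
    then have Ji: "J i = 1" and rest: "(\<Sum>j\<in>{..<r}-{i}. J j) = 0" using s i by linarith+
    have "J = unitv i"
    proof (rule ext)
      fix t show "J t = unitv i t"
      proof (cases "t < r")
        case True
        show ?thesis
        proof (cases "t = i")
          case True then show ?thesis using Ji by (simp add: unitv_def)
        next
          case False
          then have "J t = 0" using rest \<open>t < r\<close> by simp
          then show ?thesis using False by (simp add: unitv_def)
        qed
      next
        case False then show ?thesis using out i by (simp add: unitv_def)
      qed
    qed
    then show "J \<in> unitv ` {..<r}" using i by blast
  qed
qed

lemma unitv_inj: "inj_on unitv {..<r}"
  by (auto simp: inj_on_def unitv_def fun_eq_iff)



lemma mul2_left_comm: "mul2 r p A (mul2 r p B C) = (mul2 r p B (mul2 r p A C) :: 'k::comm_ring_1 alg2)"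
  by (simp add: mul2_assoc[symmetric] mul2_comm[of r p A B])

lemma sum2_delta_gen:
  assumes "finite A" "finite B" "a0 \<in> A" "b0 \<in> B"
  shows "(\<Sum>x\<in>A. \<Sum>y\<in>B. if x = a0 \<and> y = b0 then g x y else (0::'k::comm_ring_1)) = g a0 b0"
proof -
  have inner: "(\<Sum>y\<in>B. if x = a0 \<and> y = b0 then g x y else 0) = (if x = a0 then g x b0 else 0)" for x
  proof (cases "x = a0")
    case True
    then show ?thesis using assms by (simp add: sum.delta)
  next
    case False
    then show ?thesis by simp
  qed
  show ?thesis unfolding inner using assms by (simp add: sum.delta)
qed

lemma sum2_delta: "i < (r::nat) \<Longrightarrow> (\<Sum>j<r. \<Sum>m<r. if j = i \<and> m = i then f j m else (0::'k::comm_ring_1)) = f i i"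
  by (rule sum2_delta_gen) auto

lemma deg2:
  assumes c: "comparison r p \<Psi>" and pr: "prime p" and ch: "p = CHAR('k::comm_ring_1)"
    and i: "i < r" and w: "w \<in> cx r p (Suc (Suc 0))"
  shows "\<Psi> (Suc (Suc 0)) w (madd (unitv i) (unitv i)) (zerom, b) = (mu r p (w (madd (unitv i) (unitv i))) b :: 'k)"
proof -
  have p0: "0 < p" using pr prime_gt_0_nat by blast
  have p1: "1 < p" using pr prime_gt_1_nat by blast
  show ?thesis
  proof (cases "b \<in> tmonos r p")
    case False
    have "\<Psi> (Suc (Suc 0)) w (madd (unitv i) (unitv i)) \<in> alg2 r p" by (rule cx_alg2[OF comp_cx[OF c w]])
    then have "\<Psi> (Suc (Suc 0)) w (madd (unitv i) (unitv i)) (zerom, b) = (0::'k)" using False by (simp add: alg2_out)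
    then show ?thesis using False by (simp add: mu_out)
  next
    case b: True
    have dQw: "dQ r p w \<in> cx r p (Suc 0)" by (rule dQ_cx[OF w])
    let ?pt = "(cm p i 1, b)"
    let ?Tw = "\<lambda>J. twist r p (w J)"
    let ?V = "\<lambda>j. \<Psi> (Suc 0) (EK (unitv j)) (unitv i)"
    have "\<Psi> (Suc (Suc 0)) w (madd (unitv i) (unitv i)) (zerom, b) = dP r p (\<Psi> (Suc (Suc 0)) w) (unitv i) ?pt"
      by (rule dP_ei_eval[symmetric, OF i p1 b])
    also have "\<dots> = \<Psi> (Suc 0) (dQ r p w) (unitv i) ?pt"
      by (simp add: comp_chain[OF c w])
    also have "\<dots> = (\<Sum>K\<in>idx r (Suc 0). mul2 r p (twist r p (dQ r p w K)) (\<Psi> (Suc 0) (EK K) (unitv i)) ?pt)"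
      by (simp add: psi_decomp[OF c p0 dQw])
    also have "\<dots> = (\<Sum>j<r. mul2 r p (twist r p (dQ r p w (unitv j))) (?V j) ?pt)"
      by (simp add: idx1 sum.reindex[OF unitv_inj])
    also have "\<dots> = (\<Sum>j<r. \<Sum>m<r. ksign (unitv j) m * mul2 r p (?Tw (madd (unitv j) (unitv m))) (mul2 r p (coefP r p m (unitv j m)) (?V j)) ?pt)"
    proof (rule sum.cong[OF refl])
      fix j assume j: "j \<in> {..<r}"
      have "twist r p (dQ r p w (unitv j)) = dP r p ?Tw (unitv j)"
        using psi_chain[OF pr ch, of r w] by (simp add: fun_eq_iff)
      then have "mul2 r p (twist r p (dQ r p w (unitv j))) (?V j) = dP r p (\<lambda>K. mul2 r p (?Tw K) (?V j)) (unitv j)"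
        by (simp add: dP_mul2)
      then show "mul2 r p (twist r p (dQ r p w (unitv j))) (?V j) ?pt =
          (\<Sum>m<r. ksign (unitv j) m * mul2 r p (?Tw (madd (unitv j) (unitv m))) (mul2 r p (coefP r p m (unitv j m)) (?V j)) ?pt)"
        by (simp add: dP_def mul2_left_comm)
    qed
    also have "\<dots> = (\<Sum>j<r. \<Sum>m<r. if j = i \<and> m = i then ksign (unitv j) m * ?Tw (madd (unitv j) (unitv m)) (zerom, b) else 0)"
    proof (intro sum.cong refl)
      fix j m assume j: "j \<in> {..<r}" and m: "m \<in> {..<r}"
      show "ksign (unitv j) m * mul2 r p (?Tw (madd (unitv j) (unitv m))) (mul2 r p (coefP r p m (unitv j m)) (?V j)) ?pt =
         (if j = i \<and> m = i then ksign (unitv j) m * ?Tw (madd (unitv j) (unitv m)) (zerom, b) else 0)"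
        using Ycl[OF c pr ch i _ _ b, of j m "?Tw (madd (unitv j) (unitv m))"] j m by simp
    qed
    also have "\<dots> = ksign (unitv i) i * ?Tw (madd (unitv i) (unitv i)) (zerom, b)"
      by (rule sum2_delta[OF i])
    also have "\<dots> = mu r p (w (madd (unitv i) (unitv i))) b"
      by (simp add: ksign_unit twist_mu[OF p0])
    finally show ?thesis .
  qed
qed

lemma mulA_zero_left: "mulA r p (\<lambda>_. 0) x = (\<lambda>_. 0 :: 'k::comm_ring_1)"
  unfolding mulA_def by (intro ext) (simp add: sum.neutral)

lemma mulA_zero_right: "mulA r p x (\<lambda>_. 0) = (\<lambda>_. 0 :: 'k::comm_ring_1)"
  unfolding mulA_def by (intro ext) (simp add: sum.neutral)

lemma actA_zero: "actA r p \<alpha> (\<lambda>_. 0) = (\<lambda>_. 0 :: 'k::comm_ring_1)"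
  by (rule ext) (simp add: actA_def mulA_zero_left mulA_zero_right)

lemma homQ_zero: "homQ r p m (\<lambda>_ _. (0::'k::comm_ring_1))"
  by (simp add: homQ_def algA_def actA_zero)

lemma tensorA_eval:
  assumes J0: "J0 \<in> idx r n" and p0: "0 < p"
    and f: "\<And>J a. f (single J (mon a)) = (if J = J0 \<and> a = zerom then 1 else (0::'k::comm_ring_1))"
  shows "tensorA r p n f X = (\<lambda>b. X J0 (zerom, b))"
proof (rule ext)
  fix b
  have "tensorA r p n f X b = (\<Sum>J\<in>idx r n. \<Sum>a\<in>tmonos r p. if J = J0 \<and> a = zerom then X J (a, b) else 0)"
    unfolding tensorA_def f by (intro sum.cong refl) simp
  also have "\<dots> = X J0 (zerom, b)" by (rule sum2_delta_gen) (use J0 p0 in simp_all)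
  finally show "tensorA r p n f X b = X J0 (zerom, b)" .
qed

lemma eta_single: "eta_hat i (single J (mon a)) = (if J = unitv i \<and> a = zerom then 1 else (0::'k::{zero,one}))"
  by (auto simp: eta_hat_def single_def mon_def)

lemma two_unitv: "(\<lambda>j. 2 * unitv i j) = madd (unitv i) (unitv i)"
  by (simp add: madd_def fun_eq_iff)

lemma zeta_single: "zeta_hat i (single J (mon a)) = (if J = madd (unitv i) (unitv i) \<and> a = zerom then 1 else (0::'k::{zero,one}))"
  by (auto simp: zeta_hat_def single_def mon_def two_unitv)

lemma uu_idx2: "i < r \<Longrightarrow> madd (unitv i) (unitv i) \<in> idx r (Suc (Suc 0))"
  by (simp add: idx_def madd_def unitv_def sum.distrib sum.delta)

theorem theorem4p2:
  fixes r :: nat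
  assumes "CHAR('k::field) > 0"
  shows "(\<exists>\<Psi> :: nat \<Rightarrow> 'k cx \<Rightarrow> 'k cx. comparison r CHAR('k) \<Psi>) \<and>
    (\<forall>\<Psi> :: nat \<Rightarrow> 'k cx \<Rightarrow> 'k cx. comparison r CHAR('k) \<Psi> \<longrightarrow>
      (\<forall>i<r.
         cohomologous r CHAR('k) 1
           (\<lambda>w. tensorA r CHAR('k) 1 (eta_hat i :: 'k pel \<Rightarrow> 'k) (\<Psi> 1 w))
           (delta_hat r CHAR('k) i) \<and>
         cohomologous r CHAR('k) 2
           (\<lambda>w. tensorA r CHAR('k) 2 (zeta_hat i :: 'k pel \<Rightarrow> 'k) (\<Psi> 2 w))
           (chi_hat r CHAR('k) i)))"
proof -
  have pr: "prime CHAR('k)" by (rule prime_CHAR_semidom[OF assms])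
  have p0: "0 < CHAR('k)" by (rule assms)
  have ex: "comparison r CHAR('k) (\<lambda>n (w :: 'k cx) J. twist r CHAR('k) (w J))"
    by (rule existence[OF pr refl])
  have main: "cohomologous r CHAR('k) 1
           (\<lambda>w. tensorA r CHAR('k) 1 (eta_hat i :: 'k pel \<Rightarrow> 'k) (\<Psi> 1 w))
           (delta_hat r CHAR('k) i) \<and>
         cohomologous r CHAR('k) 2
           (\<lambda>w. tensorA r CHAR('k) 2 (zeta_hat i :: 'k pel \<Rightarrow> 'k) (\<Psi> 2 w))
           (chi_hat r CHAR('k) i)"
    if c: "comparison r CHAR('k) \<Psi>" and i: "i < r" for \<Psi> :: "nat \<Rightarrow> 'k cx \<Rightarrow> 'k cx" and i
  proof
    show "cohomologous r CHAR('k) 1 (\<lambda>w. tensorA r CHAR('k) 1 (eta_hat i :: 'k pel \<Rightarrow> 'k) (\<Psi> 1 w)) (delta_hat r CHAR('k) i)"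
      unfolding cohomologous_def
    proof (intro exI conjI ballI)
      show "homQ r CHAR('k) (1 - 1) (\<lambda>_ _. 0 :: 'k)" by (rule homQ_zero)
    next
      fix w :: "'k cx" assume w: "w \<in> cx r CHAR('k) 1"
      have t: "tensorA r CHAR('k) 1 (eta_hat i :: 'k pel \<Rightarrow> 'k) (\<Psi> 1 w) = (\<lambda>b. \<Psi> 1 w (unitv i) (zerom, b))"
        by (rule tensorA_eval) (use i p0 unitv_idx1[OF i] in \<open>simp_all add: eta_single\<close>)
      have w1: "w \<in> cx r CHAR('k) (Suc 0)" using w by simp
      have d: "\<Psi> 1 w (unitv i) (zerom, b) = mu r CHAR('k) (w (unitv i)) b" for b
        using deg1[OF c pr refl i w1, of b] by simp
      show "tensorA r CHAR('k) 1 (eta_hat i :: 'k pel \<Rightarrow> 'k) (\<Psi> 1 w) = (\<lambda>e. delta_hat r CHAR('k) i w e + 0)"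
        unfolding t delta_hat_def d by simp
    qed
  next
    show "cohomologous r CHAR('k) 2 (\<lambda>w. tensorA r CHAR('k) 2 (zeta_hat i :: 'k pel \<Rightarrow> 'k) (\<Psi> 2 w)) (chi_hat r CHAR('k) i)"
      unfolding cohomologous_def
    proof (intro exI conjI ballI)
      show "homQ r CHAR('k) (2 - 1) (\<lambda>_ _. 0 :: 'k)" by (rule homQ_zero)
    next
      fix w :: "'k cx" assume w: "w \<in> cx r CHAR('k) 2"
      have w': "w \<in> cx r CHAR('k) (Suc (Suc 0))" using w by (simp add: numeral_2_eq_2)
      have t: "tensorA r CHAR('k) 2 (zeta_hat i :: 'k pel \<Rightarrow> 'k) (\<Psi> 2 w) = (\<lambda>b. \<Psi> 2 w (madd (unitv i) (unitv i)) (zerom, b))"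
        by (rule tensorA_eval) (use i p0 uu_idx2[OF i] in \<open>simp_all add: zeta_single numeral_2_eq_2\<close>)
      have d: "\<Psi> 2 w (madd (unitv i) (unitv i)) (zerom, b) = mu r CHAR('k) (w (madd (unitv i) (unitv i))) b" for b
        using deg2[OF c pr refl i w', of b] by (simp add: numeral_2_eq_2)
      show "tensorA r CHAR('k) 2 (zeta_hat i :: 'k pel \<Rightarrow> 'k) (\<Psi> 2 w) = (\<lambda>e. chi_hat r CHAR('k) i w e + 0)"
        unfolding t chi_hat_def d two_unitv by simp
    qed
  qed
  show ?thesis using ex main by blast
qed


end
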